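(* Let $(G;\mathcal{B},\mathcal{S})$ be a planar tumor graph. Then: (1) for any pair $\{x,y\}$ of distinct vertices of $\mathcal{B}$ and any $z\in V(G)\setminus\{x,y\}$, we have $|N(z)\cap\mathcal{S}_{xy}|\le 2$; in particular, the number of edges of $G$ with both endpoints in $\mathcal{S}_{xy}$ is at most $|\mathcal{S}_{xy}|$; (2) $G$ has at most four edges between any fixed pair of distinct tumors.
   Context: A tumor graph is a triple $(G;\mathcal{B},\mathcal{S})$ where $G$ is a graph, $V(G)=\mathcal{B}\sqcup\mathcal{S}$, and every vertex in $\mathcal{S}$ has at most two neighbors in $\mathcal{B}$; it is planar if $G$ is planar. For distinct $x,y\in\mathcal{B}$, $\mathcal{S}_{xy}=\{s\in\mathcal{S}: N(s)\cap\mathcal{B}=\{x,y\}\}$; these sets are called tumors, and tumors $\mathcal{S}_{xy},\mathcal{S}_{zw}$ are distinct when $\{x,y\}\ne\{z,w\}$. $N(v)$ is the neighborhood of $v$ in $G$. *)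

theory Defs
  imports "HOL-Analysis.Analysis"
begin

definition simple_graph :: "'a set \<Rightarrow> ('a \<Rightarrow> 'a \<Rightarrow> bool) \<Rightarrow> bool" where
  "simple_graph V E \<longleftrightarrow> finite V \<and> (\<forall>u v. E u v \<longrightarrow> u \<in> V \<and> v \<in> V \<and> u \<noteq> v \<and> E v u)"

definition edges :: "('a \<Rightarrow> 'a \<Rightarrow> bool) \<Rightarrow> 'a set set" where
  "edges E = {{u, v} | u v. E u v}"

definition nbhd :: "'a set \<Rightarrow> ('a \<Rightarrow> 'a \<Rightarrow> bool) \<Rightarrow> 'a \<Rightarrow> 'a set" where
  "nbhd V E v = {w \<in> V. E v w}"

definition planar_graph :: "'a set \<Rightarrow> ('a \<Rightarrow> 'a \<Rightarrow> bool) \<Rightarrow> bool" where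
  "planar_graph V E \<longleftrightarrow>
    (\<exists>(pos :: 'a \<Rightarrow> complex) (\<gamma> :: 'a set \<Rightarrow> real \<Rightarrow> complex).
       inj_on pos V \<and>
       (\<forall>u v. E u v \<longrightarrow>
          arc (\<gamma> {u, v}) \<and>
          {pathstart (\<gamma> {u, v}), pathfinish (\<gamma> {u, v})} = {pos u, pos v} \<and>
          path_image (\<gamma> {u, v}) \<inter> pos ` V = {pos u, pos v}) \<and>
       (\<forall>e \<in> edges E. \<forall>e' \<in> edges E. e \<noteq> e' \<longrightarrow>
          path_image (\<gamma> e) \<inter> path_image (\<gamma> e') \<subseteq> pos ` V))"

definition tumor_graph :: "'a set \<Rightarrow> ('a \<Rightarrow> 'a \<Rightarrow> bool) \<Rightarrow> 'a set \<Rightarrow> 'a set \<Rightarrow> bool" where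
  "tumor_graph V E B S \<longleftrightarrow> simple_graph V E \<and> B \<union> S = V \<and> B \<inter> S = {} \<and>
     (\<forall>s \<in> S. card (nbhd V E s \<inter> B) \<le> 2)"

definition planar_tumor_graph :: "'a set \<Rightarrow> ('a \<Rightarrow> 'a \<Rightarrow> bool) \<Rightarrow> 'a set \<Rightarrow> 'a set \<Rightarrow> bool" where
  "planar_tumor_graph V E B S \<longleftrightarrow> tumor_graph V E B S \<and> planar_graph V E"

definition tumor :: "'a set \<Rightarrow> ('a \<Rightarrow> 'a \<Rightarrow> bool) \<Rightarrow> 'a set \<Rightarrow> 'a set \<Rightarrow> 'a \<Rightarrow> 'a \<Rightarrow> 'a set" where
  "tumor V E B S x y = {s \<in> S. nbhd V E s \<inter> B = {x, y}}"

definition edges_between :: "('a \<Rightarrow> 'a \<Rightarrow> bool) \<Rightarrow> 'a set \<Rightarrow> 'a set \<Rightarrow> 'a set set" where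
  "edges_between E X Y = {{u, v} | u v. E u v \<and> u \<in> X \<and> v \<in> Y}"

end

theory Submission
  imports Defs
begin


definition oarc :: "(real \<Rightarrow> complex) \<Rightarrow> complex set" where
  "oarc g = path_image g - {pathstart g, pathfinish g}"

lemma oarc_image: assumes "arc g" shows "oarc g = g ` {0<..<1}"
proof -
  have inj: "inj_on g {0..1}" using assms arc_def by blast
  show ?thesis
  proof
    show "oarc g \<subseteq> g ` {0<..<1}"
      unfolding oarc_def path_image_def pathstart_def pathfinish_def
      by (force simp: less_le)
    show "g ` {0<..<1} \<subseteq> oarc g"
    proof
      fix y assume "y \<in> g ` {0<..<1}"
      then obtain t where t: "0 < t" "t < 1" "y = g t" by auto
      have "g t \<noteq> g 0" using inj t by (metis atLeastAtMost_iff inj_on_eq_iff less_eq_real_def order_less_irrefl zero_less_one_class.zero_le_one)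
      moreover have "g t \<noteq> g 1" using inj t by (metis atLeastAtMost_iff inj_on_eq_iff less_eq_real_def order_less_irrefl zero_less_one_class.zero_le_one)
      ultimately show "y \<in> oarc g" using t
        unfolding oarc_def path_image_def pathstart_def pathfinish_def by auto
    qed
  qed
qed

lemma oarc_connected: assumes "arc g" shows "connected (oarc g)"
proof -
  have "continuous_on {0<..<1} g"
    using assms arc_imp_path path_def continuous_on_subset by (metis greaterThanLessThan_subseteq_atLeastAtMost_iff order_refl)
  then show ?thesis using oarc_image[OF assms] connected_continuous_image by (metis connected_Ioo)
qed

lemma oarc_closure: assumes "arc g" shows "path_image g \<subseteq> closure (oarc g)"
proof -
  have c: "continuous_on (closure {0<..<1::real}) g"
    using assms arc_imp_path path_def by (simp add: path_def)
  have "g ` closure {0<..<1} \<subseteq> closure (g ` {0<..<1})"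
    by (rule image_closure_subset[OF c closed_closure closure_subset])
  then show ?thesis using oarc_image[OF assms] by (simp add: path_image_def)
qed

lemma oarc_nonempty: assumes "arc g" shows "oarc g \<noteq> {}"
  using oarc_image[OF assms] by (simp)

lemma oarc_sub: "oarc g \<subseteq> path_image g" by (auto simp: oarc_def)

lemma conn_side:
  assumes "connected S" "S \<inter> K = {}"
  shows "S \<subseteq> inside K \<or> S \<subseteq> outside K"
  using inside_outside_intersect_connected[OF assms(1), of K] assms(2) inside_Un_outside[of K]
  by blast

lemma jordan2:
  fixes P1 P2 :: "real \<Rightarrow> complex"
  assumes "arc P1" "arc P2" "pathstart P1 = u" "pathstart P2 = u"
    "pathfinish P1 = v" "pathfinish P2 = v" "path_image P1 \<inter> path_image P2 \<subseteq> {u,v}"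
  shows "inside (path_image P1 \<union> path_image P2) \<noteq> {}"
    "open (inside (path_image P1 \<union> path_image P2))"
    "connected (inside (path_image P1 \<union> path_image P2))"
    "outside (path_image P1 \<union> path_image P2) \<noteq> {}"
    "open (outside (path_image P1 \<union> path_image P2))"
    "connected (outside (path_image P1 \<union> path_image P2))"
    "frontier (inside (path_image P1 \<union> path_image P2)) = path_image P1 \<union> path_image P2"
    "frontier (outside (path_image P1 \<union> path_image P2)) = path_image P1 \<union> path_image P2"
    "compact (path_image P1 \<union> path_image P2)"
    "closed (path_image P1 \<union> path_image P2)"
    "bounded (path_image P1 \<union> path_image P2)"
proof -
  let ?c = "P1 +++ reversepath P2"
  have sp: "simple_path ?c"
    using assms by (subst simple_path_join_loop_eq) (auto simp: arc_reversepath)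
  have cl: "pathfinish ?c = pathstart ?c" using assms by simp
  have im: "path_image ?c = path_image P1 \<union> path_image P2" using assms by (simp add: path_image_join)
  have c: "compact (path_image P1 \<union> path_image P2)" using assms by (simp add: compact_Un compact_path_image arc_imp_path)
  note J = Jordan_inside_outside[OF sp cl, unfolded im]
  show "inside (path_image P1 \<union> path_image P2) \<noteq> {}"
    "open (inside (path_image P1 \<union> path_image P2))"
    "connected (inside (path_image P1 \<union> path_image P2))"
    "outside (path_image P1 \<union> path_image P2) \<noteq> {}"
    "open (outside (path_image P1 \<union> path_image P2))"
    "connected (outside (path_image P1 \<union> path_image P2))"
    "frontier (inside (path_image P1 \<union> path_image P2)) = path_image P1 \<union> path_image P2"
    "frontier (outside (path_image P1 \<union> path_image P2)) = path_image P1 \<union> path_image P2"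
    using J by auto
  show "compact (path_image P1 \<union> path_image P2)" by (rule c)
  then show "closed (path_image P1 \<union> path_image P2)" by (rule compact_imp_closed)
  from c show "bounded (path_image P1 \<union> path_image P2)" by (rule compact_imp_bounded)
qed

lemma closure_inside_pt:
  fixes K :: "complex set"
  assumes "closed K" "S \<subseteq> inside K" "p \<in> closure S"
  shows "p \<in> K \<union> inside K"
  using assms closure_mono closure_inside_subset by blast

lemma closure_outside_pt:
  fixes K :: "complex set"
  assumes "closed K" "S \<subseteq> outside K" "p \<in> closure S"
  shows "p \<in> K \<union> outside K"
  using assms closure_mono closure_outside_subset by blast

lemma arc_ends_closure:
  assumes "arc d" shows "pathstart d \<in> closure (oarc d)" "pathfinish d \<in> closure (oarc d)"
  using oarc_closure[OF assms] pathstart_in_path_image pathfinish_in_path_image by blast+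

lemma oarc_reverse: "oarc (reversepath d) = oarc d"
  by (auto simp: oarc_def)

lemma theta_some_inside:
  fixes A B M :: "real \<Rightarrow> complex"
  assumes arcs: "arc A" "arc B" "arc M"
    and st: "pathstart A = u" "pathstart B = u" "pathstart M = u"
    and fi: "pathfinish A = v" "pathfinish B = v" "pathfinish M = v"
    and AB: "path_image A \<inter> path_image B \<subseteq> {u,v}"
    and AM: "path_image A \<inter> path_image M \<subseteq> {u,v}"
    and BM: "path_image B \<inter> path_image M \<subseteq> {u,v}"
  shows "oarc A \<subseteq> inside (path_image B \<union> path_image M) \<or>
         oarc B \<subseteq> inside (path_image A \<union> path_image M) \<or>
         oarc M \<subseteq> inside (path_image A \<union> path_image B)"
proof (rule ccontr)
  let ?A = "path_image A" and ?B = "path_image B" and ?M = "path_image M"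
  assume neg: "\<not> ?thesis"
  note JAB = jordan2[OF arcs(1,2) st(1,2) fi(1,2) AB]
  note JAM = jordan2[OF arcs(1,3) st(1,3) fi(1,3) AM]
  have BM': "path_image B \<inter> path_image M \<subseteq> {u,v}" using BM .
  note JBM = jordan2[OF arcs(2,3) st(2,3) fi(2,3) BM]
  have uvA: "u \<in> ?A" "v \<in> ?A" using st fi pathstart_in_path_image pathfinish_in_path_image by metis+
  have uvB: "u \<in> ?B" "v \<in> ?B" using st fi pathstart_in_path_image pathfinish_in_path_image by metis+
  have uvM: "u \<in> ?M" "v \<in> ?M" using st fi pathstart_in_path_image pathfinish_in_path_image by metis+
  have dA: "oarc A \<inter> (?B \<union> ?M) = {}" using AB AM st fi by (auto simp: oarc_def)
  have dB: "oarc B \<inter> (?A \<union> ?M) = {}" using AB BM st fi by (auto simp: oarc_def)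
  have dM: "oarc M \<inter> (?A \<union> ?B) = {}" using AM BM st fi by (auto simp: oarc_def)
  have oA: "oarc A \<subseteq> outside (?B \<union> ?M)"
    using conn_side[OF oarc_connected[OF arcs(1)] dA] neg by blast
  have oB: "oarc B \<subseteq> outside (?A \<union> ?M)"
    using conn_side[OF oarc_connected[OF arcs(2)] dB] neg by blast
  have oM: "oarc M \<subseteq> outside (?A \<union> ?B)"
    using conn_side[OF oarc_connected[OF arcs(3)] dM] neg by blast
  have MA: "?M \<subseteq> oarc M \<union> ?A" using st fi uvA by (auto simp: oarc_def)
  have IM: "inside (?A \<union> ?B) \<inter> ?M = {}"
  proof -
    have "inside (?A \<union> ?B) \<inter> oarc M = {}" using oM inside_Int_outside by blast
    moreover have "inside (?A \<union> ?B) \<inter> ?A = {}" using inside_no_overlap by blast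
    ultimately show ?thesis using MA by blast
  qed
  have I1: "inside (?A \<union> ?B) \<inter> (?B \<union> ?M) = {}" using IM inside_no_overlap by blast
  have I2: "inside (?A \<union> ?B) \<inter> (?A \<union> ?M) = {}" using IM inside_no_overlap by blast
  have cI: "connected (inside (?A \<union> ?B))" by (rule JAB(3))
  obtain q where q: "q \<in> oarc A" using oarc_nonempty[OF arcs(1)] by blast
  have qfr: "q \<in> closure (inside (?A \<union> ?B))"
  proof -
    have "q \<in> frontier (inside (?A \<union> ?B))" using JAB(7) q oarc_sub by blast
    then show ?thesis by (simp add: frontier_def)
  qed
  have "outside (?B \<union> ?M) \<inter> inside (?A \<union> ?B) \<noteq> {}"
  proof
    assume "outside (?B \<union> ?M) \<inter> inside (?A \<union> ?B) = {}"
    then have "outside (?B \<union> ?M) \<inter> closure (inside (?A \<union> ?B)) = {}"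
      using JBM(5) open_Int_closure_eq_empty by blast
    then show False using q qfr oA by blast
  qed
  then have X1: "inside (?A \<union> ?B) \<subseteq> outside (?B \<union> ?M)"
    using conn_side[OF cI I1] inside_Int_outside by blast
  obtain q' where q': "q' \<in> oarc B" using oarc_nonempty[OF arcs(2)] by blast
  have qfr': "q' \<in> closure (inside (?A \<union> ?B))"
  proof -
    have "q' \<in> frontier (inside (?A \<union> ?B))" using JAB(7) q' oarc_sub by blast
    then show ?thesis by (simp add: frontier_def)
  qed
  have "outside (?A \<union> ?M) \<inter> inside (?A \<union> ?B) \<noteq> {}"
  proof
    assume "outside (?A \<union> ?M) \<inter> inside (?A \<union> ?B) = {}"
    then have "outside (?A \<union> ?M) \<inter> closure (inside (?A \<union> ?B)) = {}"
      using JAM(5) open_Int_closure_eq_empty by blast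
    then show False using q' qfr' oB by blast
  qed
  then have X2: "inside (?A \<union> ?B) \<subseteq> outside (?A \<union> ?M)"
    using conn_side[OF cI I2] inside_Int_outside by blast
  obtain x where x: "x \<in> inside (?A \<union> ?B)" using JAB(1) by blast
  have bd: "bounded (- outside (?A \<union> ?B) \<union> - outside (?B \<union> ?M) \<union> - outside (?A \<union> ?M))"
    using JAB(11) JBM(11) JAM(11) by (simp add: cobounded_outside)
  obtain y where y: "y \<in> outside (?A \<union> ?B)" "y \<in> outside (?B \<union> ?M)" "y \<in> outside (?A \<union> ?M)"
  proof -
    have "\<not> (UNIV :: complex set) \<subseteq> - outside (?A \<union> ?B) \<union> - outside (?B \<union> ?M) \<union> - outside (?A \<union> ?M)"
      using bd not_bounded_UNIV bounded_subset by blast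
    then show ?thesis using that by blast
  qed
  have c1: "connected_component (- (?B \<union> ?M)) x y"
    apply (rule connected_componentI[OF JBM(6)])
    using X1 x y(2) outside_no_overlap by blast+
  have c2: "connected_component (- (?A \<union> ?M)) x y"
    apply (rule connected_componentI[OF JAM(6)])
    using X2 x y(3) outside_no_overlap by blast+
  have int: "(?B \<union> ?M) \<inter> (?A \<union> ?M) = ?M" using AB uvM by blast
  have "connected_component (- ((?B \<union> ?M) \<union> (?A \<union> ?M))) x y"
    apply (rule Janiszewski[OF JBM(9) JAM(10) _ c1 c2])
    using int connected_arc_image[OF arcs(3)] by simp
  then have "connected_component (- (?A \<union> ?B)) x y"
    by (rule connected_component_of_subset) auto
  then have "y \<in> inside (?A \<union> ?B)" using x unfolding inside_def
    by (metis (no_types, lifting) connected_component_eq mem_Collect_eq ComplD connected_component_in)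
  then show False using y inside_Int_outside by blast
qed


lemma theta_face:
  fixes A B M :: "real \<Rightarrow> complex"
  assumes arcs: "arc A" "arc B" "arc M"
    and st: "pathstart A = u" "pathstart B = u" "pathstart M = u"
    and fi: "pathfinish A = v" "pathfinish B = v" "pathfinish M = v"
    and AB: "path_image A \<inter> path_image B \<subseteq> {u,v}"
    and AM: "path_image A \<inter> path_image M \<subseteq> {u,v}"
    and BM: "path_image B \<inter> path_image M \<subseteq> {u,v}"
    and mid: "oarc M \<subseteq> inside (path_image A \<union> path_image B)"
  shows "inside (path_image A \<union> path_image M) \<subseteq> inside (path_image A \<union> path_image B)"
    and "\<And>d. arc d \<Longrightarrow> pathstart d \<in> oarc A \<Longrightarrow> pathfinish d \<in> oarc B \<Longrightarrow>
           oarc d \<inter> (path_image A \<union> path_image B \<union> path_image M) = {} \<Longrightarrow>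
           oarc d \<subseteq> outside (path_image A \<union> path_image B)"
    and "\<And>d. arc d \<Longrightarrow> pathstart d \<in> oarc A \<Longrightarrow> pathfinish d \<in> oarc M \<Longrightarrow>
           oarc d \<inter> (path_image A \<union> path_image B \<union> path_image M) = {} \<Longrightarrow>
           oarc d \<subseteq> inside (path_image A \<union> path_image M)"
proof -
  let ?A = "path_image A" and ?B = "path_image B" and ?M = "path_image M"
  note JAB = jordan2[OF arcs(1,2) st(1,2) fi(1,2) AB]
  note JAM = jordan2[OF arcs(1,3) st(1,3) fi(1,3) AM]
  note JBM = jordan2[OF arcs(2,3) st(2,3) fi(2,3) BM]
  have uv: "u \<noteq> v" using arcs(1) st fi arc_distinct_ends by metis
  have ne: "?M \<inter> inside (?A \<union> ?B) \<noteq> {}"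
    using mid oarc_nonempty[OF arcs(3)] oarc_sub by blast
  have uvA: "u \<in> ?A" "v \<in> ?A" using st fi pathstart_in_path_image pathfinish_in_path_image by metis+
  have uvB: "u \<in> ?B" "v \<in> ?B" using st fi pathstart_in_path_image pathfinish_in_path_image by metis+
  have uvM: "u \<in> ?M" "v \<in> ?M" using st fi pathstart_in_path_image pathfinish_in_path_image by metis+
  have eAB: "?A \<inter> ?B = {u,v}" using AB uvA uvB by blast
  have eAM: "?A \<inter> ?M = {u,v}" using AM uvA uvM by blast
  have eBM: "?B \<inter> ?M = {u,v}" using BM uvB uvM by blast
  have S: "inside (?A \<union> ?M) \<inter> inside (?B \<union> ?M) = {} \<and>
      inside (?A \<union> ?M) \<union> inside (?B \<union> ?M) \<union> (?M - {u, v}) = inside (?A \<union> ?B)"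
    by (rule split_inside_simple_closed_curve[OF arc_imp_simple_path[OF arcs(1)] st(1) fi(1)
       arc_imp_simple_path[OF arcs(2)] st(2) fi(2) arc_imp_simple_path[OF arcs(3)] st(3) fi(3) uv
       eAB eAM eBM ne]) blast
  then have S1: "inside (?A \<union> ?M) \<inter> inside (?B \<union> ?M) = {}"
    and S2: "inside (?A \<union> ?M) \<union> inside (?B \<union> ?M) \<union> (?M - {u, v}) = inside (?A \<union> ?B)"
    by auto
  show sub1: "inside (?A \<union> ?M) \<subseteq> inside (?A \<union> ?B)" using S2 by blast
  have sub2: "inside (?B \<union> ?M) \<subseteq> inside (?A \<union> ?B)" using S2 by blast
  have split: "S \<subseteq> inside (?A \<union> ?M) \<or> S \<subseteq> inside (?B \<union> ?M)"
    if "connected S" "S \<subseteq> inside (?A \<union> ?B)" "S \<inter> ?M = {}" for S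
  proof -
    have "S \<inter> (?A \<union> ?M) = {}" using that inside_no_overlap by blast
    then have "S \<subseteq> inside (?A \<union> ?M) \<or> S \<subseteq> outside (?A \<union> ?M)" using conn_side that(1) by blast
    moreover have "outside (?A \<union> ?M) \<inter> inside (?A \<union> ?B) \<subseteq> inside (?B \<union> ?M)"
      using S2 inside_Int_outside outside_no_overlap by blast
    ultimately show ?thesis using that by blast
  qed
  have oA: "oarc A \<inter> (?B \<union> ?M) = {}" using AB AM st fi by (auto simp: oarc_def)
  have oB: "oarc B \<inter> (?A \<union> ?M) = {}" using AB BM st fi by (auto simp: oarc_def)
  have oM: "oarc M \<inter> (?A \<union> ?B) = {}" using AM BM st fi by (auto simp: oarc_def)
  show "oarc d \<subseteq> outside (?A \<union> ?B)"
    if d: "arc d" "pathstart d \<in> oarc A" "pathfinish d \<in> oarc B"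
      "oarc d \<inter> (?A \<union> ?B \<union> ?M) = {}" for d
  proof -
    have cd: "connected (oarc d)" using oarc_connected[OF d(1)] .
    have "oarc d \<inter> (?A \<union> ?B) = {}" using d(4) by blast
    then have "oarc d \<subseteq> inside (?A \<union> ?B) \<or> oarc d \<subseteq> outside (?A \<union> ?B)" using conn_side cd by blast
    moreover have False if I: "oarc d \<subseteq> inside (?A \<union> ?B)"
    proof -
      have "oarc d \<inter> ?M = {}" using d(4) by blast
      then have "oarc d \<subseteq> inside (?A \<union> ?M) \<or> oarc d \<subseteq> inside (?B \<union> ?M)" using split cd I by blast
      moreover have False if I1: "oarc d \<subseteq> inside (?A \<union> ?M)"
      proof -
        have "pathfinish d \<in> (?A \<union> ?M) \<union> inside (?A \<union> ?M)"
          using closure_inside_pt[OF JAM(10) I1 arc_ends_closure(2)[OF d(1)]] .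
        moreover have "pathfinish d \<notin> ?A \<union> ?M" using d(3) oB by blast
        moreover have "pathfinish d \<in> ?B" using d(3) oarc_sub by blast
        ultimately show False using sub1 inside_no_overlap by blast
      qed
      moreover have False if I2: "oarc d \<subseteq> inside (?B \<union> ?M)"
      proof -
        have "pathstart d \<in> (?B \<union> ?M) \<union> inside (?B \<union> ?M)"
          using closure_inside_pt[OF JBM(10) I2 arc_ends_closure(1)[OF d(1)]] .
        moreover have "pathstart d \<notin> ?B \<union> ?M" using d(2) oA by blast
        moreover have "pathstart d \<in> ?A" using d(2) oarc_sub by blast
        ultimately show False using sub2 inside_no_overlap by blast
      qed
      ultimately show False by blast
    qed
    ultimately show ?thesis by blast
  qed
  show "oarc d \<subseteq> inside (?A \<union> ?M)"
    if d: "arc d" "pathstart d \<in> oarc A" "pathfinish d \<in> oarc M"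
      "oarc d \<inter> (?A \<union> ?B \<union> ?M) = {}" for d
  proof -
    have cd: "connected (oarc d)" using oarc_connected[OF d(1)] .
    have "oarc d \<inter> (?A \<union> ?B) = {}" using d(4) by blast
    then have "oarc d \<subseteq> inside (?A \<union> ?B) \<or> oarc d \<subseteq> outside (?A \<union> ?B)" using conn_side cd by blast
    moreover have False if O: "oarc d \<subseteq> outside (?A \<union> ?B)"
    proof -
      have "pathfinish d \<in> (?A \<union> ?B) \<union> outside (?A \<union> ?B)"
        using closure_outside_pt[OF JAB(10) O arc_ends_closure(2)[OF d(1)]] .
      moreover have "pathfinish d \<in> inside (?A \<union> ?B)" using d(3) mid by blast
      ultimately show False using inside_no_overlap inside_Int_outside by blast
    qed
    moreover have ?thesis if I: "oarc d \<subseteq> inside (?A \<union> ?B)"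
    proof -
      have "oarc d \<inter> ?M = {}" using d(4) by blast
      then have "oarc d \<subseteq> inside (?A \<union> ?M) \<or> oarc d \<subseteq> inside (?B \<union> ?M)" using split cd I by blast
      moreover have False if I2: "oarc d \<subseteq> inside (?B \<union> ?M)"
      proof -
        have "pathstart d \<in> (?B \<union> ?M) \<union> inside (?B \<union> ?M)"
          using closure_inside_pt[OF JBM(10) I2 arc_ends_closure(1)[OF d(1)]] .
        moreover have "pathstart d \<notin> ?B \<union> ?M" using d(2) oA by blast
        moreover have "pathstart d \<in> ?A" using d(2) oarc_sub by blast
        ultimately show False using sub2 inside_no_overlap by blast
      qed
      ultimately show ?thesis by blast
    qed
    ultimately show ?thesis by blast
  qed
qed


lemma chord_sides:
  fixes P1 P2 c d :: "real \<Rightarrow> complex"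
  assumes arcs: "arc P1" "arc P2" "arc c" "arc d"
    and st: "pathstart P1 = u" "pathstart P2 = u" "pathstart c = u"
    and fi: "pathfinish P1 = v" "pathfinish P2 = v" "pathfinish c = v"
    and i12: "path_image P1 \<inter> path_image P2 \<subseteq> {u,v}"
    and i1c: "path_image P1 \<inter> path_image c \<subseteq> {u,v}"
    and i2c: "path_image P2 \<inter> path_image c \<subseteq> {u,v}"
    and ds: "pathstart d \<in> oarc P1" and df: "pathfinish d \<in> oarc P2"
    and dd: "oarc d \<inter> (path_image P1 \<union> path_image P2 \<union> path_image c) = {}"
  shows "(oarc c \<subseteq> inside (path_image P1 \<union> path_image P2) \<and> oarc d \<subseteq> outside (path_image P1 \<union> path_image P2)) \<or>
         (oarc c \<subseteq> outside (path_image P1 \<union> path_image P2) \<and> oarc d \<subseteq> inside (path_image P1 \<union> path_image P2))"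
proof -
  let ?A = "path_image P1" and ?B = "path_image P2" and ?C = "path_image c"
  have i21: "?B \<inter> ?A \<subseteq> {u,v}" using i12 by blast
  have ic1: "?C \<inter> ?A \<subseteq> {u,v}" using i1c by blast
  have ic2: "?C \<inter> ?B \<subseteq> {u,v}" using i2c by blast
  have oc: "oarc c \<inter> (?A \<union> ?B) = {}" using i1c i2c st fi by (auto simp: oarc_def)
  have cside: "oarc c \<subseteq> inside (?A \<union> ?B) \<or> oarc c \<subseteq> outside (?A \<union> ?B)"
    using conn_side[OF oarc_connected[OF arcs(3)] oc] .
  have cne: "oarc c \<noteq> {}" by (rule oarc_nonempty[OF arcs(3)])
  have dne: "oarc d \<noteq> {}" by (rule oarc_nonempty[OF arcs(4)])
  have Kc: "?A \<union> ?B = ?B \<union> ?A" by blast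
  consider (a) "oarc P1 \<subseteq> inside (?B \<union> ?C)" | (b) "oarc P2 \<subseteq> inside (?A \<union> ?C)"
     | (c) "oarc c \<subseteq> inside (?A \<union> ?B)"
    using theta_some_inside[OF arcs(1,2,3) st fi i12 i1c i2c] by blast
  then show ?thesis
  proof cases
    case a
    note F = theta_face[OF arcs(2,3,1) st(2,3,1) fi(2,3,1) i2c i21 ic1 a]
    have "oarc (reversepath d) \<subseteq> inside (?B \<union> ?A)"
      apply (rule F(3))
      using arcs(4) ds df dd by (auto simp: arc_reversepath oarc_reverse)
    then have dI: "oarc d \<subseteq> inside (?A \<union> ?B)" by (simp add: oarc_reverse Kc)
    have "\<not> oarc c \<subseteq> inside (?B \<union> ?A)"
      using F(1) cne oarc_sub[of c] inside_no_overlap[of "?B \<union> ?C"] by blast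
    then have "\<not> oarc c \<subseteq> inside (?A \<union> ?B)" by (metis Kc)
    then show ?thesis using cside dI by blast
  next
    case b
    note F = theta_face[OF arcs(1,3,2) st(1,3,2) fi(1,3,2) i1c i12 ic2 b]
    have dI: "oarc d \<subseteq> inside (?A \<union> ?B)"
      apply (rule F(3))
      using arcs(4) ds df dd by auto
    have "\<not> oarc c \<subseteq> inside (?A \<union> ?B)"
      using F(1) cne oarc_sub[of c] inside_no_overlap[of "?A \<union> ?C"] by blast
    then show ?thesis using cside dI by blast
  next
    case c
    note F = theta_face[OF arcs(1,2,3) st fi i12 i1c i2c c]
    have "oarc d \<subseteq> outside (?A \<union> ?B)"
      apply (rule F(2))
      using arcs(4) ds df dd by auto
    then show ?thesis using c by blast
  qed
qed


lemma arc3: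
  fixes a b c :: "real \<Rightarrow> complex"
  assumes "arc a" "arc b" "arc c" "pathfinish a = pathstart b" "pathfinish b = pathstart c"
    "path_image a \<inter> path_image b \<subseteq> {pathstart b}"
    "path_image b \<inter> path_image c \<subseteq> {pathstart c}"
    "path_image a \<inter> path_image c \<subseteq> {}"
  shows "arc (a +++ (b +++ c))"
    "path_image (a +++ (b +++ c)) = path_image a \<union> path_image b \<union> path_image c"
    "pathstart (a +++ (b +++ c)) = pathstart a"
    "pathfinish (a +++ (b +++ c)) = pathfinish c"
proof -
  have bc: "arc (b +++ c)" using assms by (intro arc_join) auto
  have ib: "path_image (b +++ c) = path_image b \<union> path_image c"
    using assms by (simp add: path_image_join)
  show "arc (a +++ (b +++ c))"
    using assms bc ib by (intro arc_join) auto
  show "path_image (a +++ (b +++ c)) = path_image a \<union> path_image b \<union> path_image c"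
    using assms ib by (simp add: path_image_join Un_assoc)
  show "pathstart (a +++ (b +++ c)) = pathstart a" by simp
  show "pathfinish (a +++ (b +++ c)) = pathfinish c" by simp
qed


lemma arc3x:
  fixes a b c :: "real \<Rightarrow> complex"
  assumes "arc a" "arc b" "arc c" "pathstart a = x" "pathfinish a = y" "pathstart b = y"
    "pathfinish b = z" "pathstart c = z" "pathfinish c = w"
    "path_image a \<inter> path_image b \<subseteq> {y}"
    "path_image b \<inter> path_image c \<subseteq> {z}"
    "path_image a \<inter> path_image c \<subseteq> {}"
  shows "arc (a +++ (b +++ c))"
    "path_image (a +++ (b +++ c)) = path_image a \<union> path_image b \<union> path_image c"
    "pathstart (a +++ (b +++ c)) = x"
    "pathfinish (a +++ (b +++ c)) = w"
  using arc3[of a b c] assms by auto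

lemma inter4: "X \<inter> Y \<subseteq> {a,b} \<inter> {c,d} \<Longrightarrow> a\<noteq>c \<Longrightarrow> a\<noteq>d \<Longrightarrow> b\<noteq>c \<Longrightarrow> b\<noteq>d \<Longrightarrow> X \<inter> Y \<subseteq> {}"
  by (auto simp: subset_iff)
lemma inter_a: "X \<inter> Y \<subseteq> {a,b} \<inter> {a,d} \<Longrightarrow> b\<noteq>d \<Longrightarrow> X \<inter> Y \<subseteq> {a}"
  by (auto simp: subset_iff)
lemma inter_b: "X \<inter> Y \<subseteq> {a,b} \<inter> {c,b} \<Longrightarrow> a\<noteq>c \<Longrightarrow> X \<inter> Y \<subseteq> {b}"
  by (auto simp: subset_iff)

lemma K33_nonplanar:
  fixes p q :: "nat \<Rightarrow> complex" and g :: "nat \<Rightarrow> nat \<Rightarrow> real \<Rightarrow> complex"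
  assumes pq: "\<And>i j. i < 3 \<Longrightarrow> j < 3 \<Longrightarrow> p i \<noteq> q j"
    and pp: "\<And>i i'. i < 3 \<Longrightarrow> i' < 3 \<Longrightarrow> i \<noteq> i' \<Longrightarrow> p i \<noteq> p i'"
    and qq: "\<And>j j'. j < 3 \<Longrightarrow> j' < 3 \<Longrightarrow> j \<noteq> j' \<Longrightarrow> q j \<noteq> q j'"
    and ga: "\<And>i j. i < 3 \<Longrightarrow> j < 3 \<Longrightarrow> arc (g i j)"
    and gs: "\<And>i j. i < 3 \<Longrightarrow> j < 3 \<Longrightarrow> pathstart (g i j) = p i"
    and gf: "\<And>i j. i < 3 \<Longrightarrow> j < 3 \<Longrightarrow> pathfinish (g i j) = q j"
    and gi: "\<And>i j i' j'. i < 3 \<Longrightarrow> j < 3 \<Longrightarrow> i' < 3 \<Longrightarrow> j' < 3 \<Longrightarrow> (i, j) \<noteq> (i', j') \<Longrightarrow>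
       path_image (g i j) \<inter> path_image (g i' j') \<subseteq> {p i, q j} \<inter> {p i', q j'}"
  shows False
proof -
  have dpq00: "p 0 \<noteq> q 0" using pq[of 0 0] by simp
  have dpq01: "p 0 \<noteq> q 1" using pq[of 0 1] by simp
  have dpq02: "p 0 \<noteq> q 2" using pq[of 0 2] by simp
  have dpq10: "p 1 \<noteq> q 0" using pq[of 1 0] by simp
  have dpq11: "p 1 \<noteq> q 1" using pq[of 1 1] by simp
  have dpq12: "p 1 \<noteq> q 2" using pq[of 1 2] by simp
  have dpq20: "p 2 \<noteq> q 0" using pq[of 2 0] by simp
  have dpq21: "p 2 \<noteq> q 1" using pq[of 2 1] by simp
  have dpq22: "p 2 \<noteq> q 2" using pq[of 2 2] by simp
  have dpp01: "p 0 \<noteq> p 1" using pp[of 0 1] by simp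
  have dqq01: "q 0 \<noteq> q 1" using qq[of 0 1] by simp
  have dpp02: "p 0 \<noteq> p 2" using pp[of 0 2] by simp
  have dqq02: "q 0 \<noteq> q 2" using qq[of 0 2] by simp
  have dpp10: "p 1 \<noteq> p 0" using pp[of 1 0] by simp
  have dqq10: "q 1 \<noteq> q 0" using qq[of 1 0] by simp
  have dpp12: "p 1 \<noteq> p 2" using pp[of 1 2] by simp
  have dqq12: "q 1 \<noteq> q 2" using qq[of 1 2] by simp
  have dpp20: "p 2 \<noteq> p 0" using pp[of 2 0] by simp
  have dqq20: "q 2 \<noteq> q 0" using qq[of 2 0] by simp
  have dpp21: "p 2 \<noteq> p 1" using pp[of 2 1] by simp
  have dqq21: "q 2 \<noteq> q 1" using qq[of 2 1] by simp
  have a00: "arc (g 0 0)" and s00: "pathstart (g 0 0) = p 0" and f00: "pathfinish (g 0 0) = q 0"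
    using ga gs gf by auto
  have m00: "p 0 \<in> path_image (g 0 0)" "q 0 \<in> path_image (g 0 0)"
    using s00 f00 pathstart_in_path_image pathfinish_in_path_image by metis+
  have a01: "arc (g 0 1)" and s01: "pathstart (g 0 1) = p 0" and f01: "pathfinish (g 0 1) = q 1"
    using ga gs gf by auto
  have m01: "p 0 \<in> path_image (g 0 1)" "q 1 \<in> path_image (g 0 1)"
    using s01 f01 pathstart_in_path_image pathfinish_in_path_image by metis+
  have a02: "arc (g 0 2)" and s02: "pathstart (g 0 2) = p 0" and f02: "pathfinish (g 0 2) = q 2"
    using ga gs gf by auto
  have m02: "p 0 \<in> path_image (g 0 2)" "q 2 \<in> path_image (g 0 2)"
    using s02 f02 pathstart_in_path_image pathfinish_in_path_image by metis+
  have a10: "arc (g 1 0)" and s10: "pathstart (g 1 0) = p 1" and f10: "pathfinish (g 1 0) = q 0"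
    using ga gs gf by auto
  have m10: "p 1 \<in> path_image (g 1 0)" "q 0 \<in> path_image (g 1 0)"
    using s10 f10 pathstart_in_path_image pathfinish_in_path_image by metis+
  have a11: "arc (g 1 1)" and s11: "pathstart (g 1 1) = p 1" and f11: "pathfinish (g 1 1) = q 1"
    using ga gs gf by auto
  have m11: "p 1 \<in> path_image (g 1 1)" "q 1 \<in> path_image (g 1 1)"
    using s11 f11 pathstart_in_path_image pathfinish_in_path_image by metis+
  have a12: "arc (g 1 2)" and s12: "pathstart (g 1 2) = p 1" and f12: "pathfinish (g 1 2) = q 2"
    using ga gs gf by auto
  have m12: "p 1 \<in> path_image (g 1 2)" "q 2 \<in> path_image (g 1 2)"
    using s12 f12 pathstart_in_path_image pathfinish_in_path_image by metis+
  have a20: "arc (g 2 0)" and s20: "pathstart (g 2 0) = p 2" and f20: "pathfinish (g 2 0) = q 0"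
    using ga gs gf by auto
  have m20: "p 2 \<in> path_image (g 2 0)" "q 0 \<in> path_image (g 2 0)"
    using s20 f20 pathstart_in_path_image pathfinish_in_path_image by metis+
  have a21: "arc (g 2 1)" and s21: "pathstart (g 2 1) = p 2" and f21: "pathfinish (g 2 1) = q 1"
    using ga gs gf by auto
  have m21: "p 2 \<in> path_image (g 2 1)" "q 1 \<in> path_image (g 2 1)"
    using s21 f21 pathstart_in_path_image pathfinish_in_path_image by metis+
  have a22: "arc (g 2 2)" and s22: "pathstart (g 2 2) = p 2" and f22: "pathfinish (g 2 2) = q 2"
    using ga gs gf by auto
  have m22: "p 2 \<in> path_image (g 2 2)" "q 2 \<in> path_image (g 2 2)"
    using s22 f22 pathstart_in_path_image pathfinish_in_path_image by metis+
  have I0001: "path_image (g 0 0) \<inter> path_image (g 0 1) \<subseteq> {p 0}"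
  proof -
    have "path_image (g 0 0) \<inter> path_image (g 0 1) \<subseteq> {p 0, q 0} \<inter> {p 0, q 1}" by (rule gi) simp_all
    then show ?thesis by (rule inter_a[OF _ dqq01])
  qed
  have I0002: "path_image (g 0 0) \<inter> path_image (g 0 2) \<subseteq> {p 0}"
  proof -
    have "path_image (g 0 0) \<inter> path_image (g 0 2) \<subseteq> {p 0, q 0} \<inter> {p 0, q 2}" by (rule gi) simp_all
    then show ?thesis by (rule inter_a[OF _ dqq02])
  qed
  have I0010: "path_image (g 0 0) \<inter> path_image (g 1 0) \<subseteq> {q 0}"
  proof -
    have "path_image (g 0 0) \<inter> path_image (g 1 0) \<subseteq> {p 0, q 0} \<inter> {p 1, q 0}" by (rule gi) simp_all
    then show ?thesis by (rule inter_b[OF _ dpp01])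
  qed
  have I0011: "path_image (g 0 0) \<inter> path_image (g 1 1) \<subseteq> {}"
  proof -
    have "path_image (g 0 0) \<inter> path_image (g 1 1) \<subseteq> {p 0, q 0} \<inter> {p 1, q 1}" by (rule gi) simp_all
    then show ?thesis by (rule inter4[OF _ dpp01 dpq01 dpq10[symmetric] dqq01])
  qed
  have I0012: "path_image (g 0 0) \<inter> path_image (g 1 2) \<subseteq> {}"
  proof -
    have "path_image (g 0 0) \<inter> path_image (g 1 2) \<subseteq> {p 0, q 0} \<inter> {p 1, q 2}" by (rule gi) simp_all
    then show ?thesis by (rule inter4[OF _ dpp01 dpq02 dpq10[symmetric] dqq02])
  qed
  have I0020: "path_image (g 0 0) \<inter> path_image (g 2 0) \<subseteq> {q 0}"
  proof -
    have "path_image (g 0 0) \<inter> path_image (g 2 0) \<subseteq> {p 0, q 0} \<inter> {p 2, q 0}" by (rule gi) simp_all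
    then show ?thesis by (rule inter_b[OF _ dpp02])
  qed
  have I0021: "path_image (g 0 0) \<inter> path_image (g 2 1) \<subseteq> {}"
  proof -
    have "path_image (g 0 0) \<inter> path_image (g 2 1) \<subseteq> {p 0, q 0} \<inter> {p 2, q 1}" by (rule gi) simp_all
    then show ?thesis by (rule inter4[OF _ dpp02 dpq01 dpq20[symmetric] dqq01])
  qed
  have I0022: "path_image (g 0 0) \<inter> path_image (g 2 2) \<subseteq> {}"
  proof -
    have "path_image (g 0 0) \<inter> path_image (g 2 2) \<subseteq> {p 0, q 0} \<inter> {p 2, q 2}" by (rule gi) simp_all
    then show ?thesis by (rule inter4[OF _ dpp02 dpq02 dpq20[symmetric] dqq02])
  qed
  have I0102: "path_image (g 0 1) \<inter> path_image (g 0 2) \<subseteq> {p 0}"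
  proof -
    have "path_image (g 0 1) \<inter> path_image (g 0 2) \<subseteq> {p 0, q 1} \<inter> {p 0, q 2}" by (rule gi) simp_all
    then show ?thesis by (rule inter_a[OF _ dqq12])
  qed
  have I0110: "path_image (g 0 1) \<inter> path_image (g 1 0) \<subseteq> {}"
  proof -
    have "path_image (g 0 1) \<inter> path_image (g 1 0) \<subseteq> {p 0, q 1} \<inter> {p 1, q 0}" by (rule gi) simp_all
    then show ?thesis by (rule inter4[OF _ dpp01 dpq00 dpq11[symmetric] dqq10])
  qed
  have I0111: "path_image (g 0 1) \<inter> path_image (g 1 1) \<subseteq> {q 1}"
  proof -
    have "path_image (g 0 1) \<inter> path_image (g 1 1) \<subseteq> {p 0, q 1} \<inter> {p 1, q 1}" by (rule gi) simp_all
    then show ?thesis by (rule inter_b[OF _ dpp01])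
  qed
  have I0112: "path_image (g 0 1) \<inter> path_image (g 1 2) \<subseteq> {}"
  proof -
    have "path_image (g 0 1) \<inter> path_image (g 1 2) \<subseteq> {p 0, q 1} \<inter> {p 1, q 2}" by (rule gi) simp_all
    then show ?thesis by (rule inter4[OF _ dpp01 dpq02 dpq11[symmetric] dqq12])
  qed
  have I0120: "path_image (g 0 1) \<inter> path_image (g 2 0) \<subseteq> {}"
  proof -
    have "path_image (g 0 1) \<inter> path_image (g 2 0) \<subseteq> {p 0, q 1} \<inter> {p 2, q 0}" by (rule gi) simp_all
    then show ?thesis by (rule inter4[OF _ dpp02 dpq00 dpq21[symmetric] dqq10])
  qed
  have I0121: "path_image (g 0 1) \<inter> path_image (g 2 1) \<subseteq> {q 1}"
  proof -
    have "path_image (g 0 1) \<inter> path_image (g 2 1) \<subseteq> {p 0, q 1} \<inter> {p 2, q 1}" by (rule gi) simp_all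
    then show ?thesis by (rule inter_b[OF _ dpp02])
  qed
  have I0122: "path_image (g 0 1) \<inter> path_image (g 2 2) \<subseteq> {}"
  proof -
    have "path_image (g 0 1) \<inter> path_image (g 2 2) \<subseteq> {p 0, q 1} \<inter> {p 2, q 2}" by (rule gi) simp_all
    then show ?thesis by (rule inter4[OF _ dpp02 dpq02 dpq21[symmetric] dqq12])
  qed
  have I0210: "path_image (g 0 2) \<inter> path_image (g 1 0) \<subseteq> {}"
  proof -
    have "path_image (g 0 2) \<inter> path_image (g 1 0) \<subseteq> {p 0, q 2} \<inter> {p 1, q 0}" by (rule gi) simp_all
    then show ?thesis by (rule inter4[OF _ dpp01 dpq00 dpq12[symmetric] dqq20])
  qed
  have I0211: "path_image (g 0 2) \<inter> path_image (g 1 1) \<subseteq> {}"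
  proof -
    have "path_image (g 0 2) \<inter> path_image (g 1 1) \<subseteq> {p 0, q 2} \<inter> {p 1, q 1}" by (rule gi) simp_all
    then show ?thesis by (rule inter4[OF _ dpp01 dpq01 dpq12[symmetric] dqq21])
  qed
  have I0212: "path_image (g 0 2) \<inter> path_image (g 1 2) \<subseteq> {q 2}"
  proof -
    have "path_image (g 0 2) \<inter> path_image (g 1 2) \<subseteq> {p 0, q 2} \<inter> {p 1, q 2}" by (rule gi) simp_all
    then show ?thesis by (rule inter_b[OF _ dpp01])
  qed
  have I0220: "path_image (g 0 2) \<inter> path_image (g 2 0) \<subseteq> {}"
  proof -
    have "path_image (g 0 2) \<inter> path_image (g 2 0) \<subseteq> {p 0, q 2} \<inter> {p 2, q 0}" by (rule gi) simp_all
    then show ?thesis by (rule inter4[OF _ dpp02 dpq00 dpq22[symmetric] dqq20])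
  qed
  have I0221: "path_image (g 0 2) \<inter> path_image (g 2 1) \<subseteq> {}"
  proof -
    have "path_image (g 0 2) \<inter> path_image (g 2 1) \<subseteq> {p 0, q 2} \<inter> {p 2, q 1}" by (rule gi) simp_all
    then show ?thesis by (rule inter4[OF _ dpp02 dpq01 dpq22[symmetric] dqq21])
  qed
  have I0222: "path_image (g 0 2) \<inter> path_image (g 2 2) \<subseteq> {q 2}"
  proof -
    have "path_image (g 0 2) \<inter> path_image (g 2 2) \<subseteq> {p 0, q 2} \<inter> {p 2, q 2}" by (rule gi) simp_all
    then show ?thesis by (rule inter_b[OF _ dpp02])
  qed
  have I1011: "path_image (g 1 0) \<inter> path_image (g 1 1) \<subseteq> {p 1}"
  proof -
    have "path_image (g 1 0) \<inter> path_image (g 1 1) \<subseteq> {p 1, q 0} \<inter> {p 1, q 1}" by (rule gi) simp_all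
    then show ?thesis by (rule inter_a[OF _ dqq01])
  qed
  have I1012: "path_image (g 1 0) \<inter> path_image (g 1 2) \<subseteq> {p 1}"
  proof -
    have "path_image (g 1 0) \<inter> path_image (g 1 2) \<subseteq> {p 1, q 0} \<inter> {p 1, q 2}" by (rule gi) simp_all
    then show ?thesis by (rule inter_a[OF _ dqq02])
  qed
  have I1020: "path_image (g 1 0) \<inter> path_image (g 2 0) \<subseteq> {q 0}"
  proof -
    have "path_image (g 1 0) \<inter> path_image (g 2 0) \<subseteq> {p 1, q 0} \<inter> {p 2, q 0}" by (rule gi) simp_all
    then show ?thesis by (rule inter_b[OF _ dpp12])
  qed
  have I1021: "path_image (g 1 0) \<inter> path_image (g 2 1) \<subseteq> {}"
  proof -
    have "path_image (g 1 0) \<inter> path_image (g 2 1) \<subseteq> {p 1, q 0} \<inter> {p 2, q 1}" by (rule gi) simp_all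
    then show ?thesis by (rule inter4[OF _ dpp12 dpq11 dpq20[symmetric] dqq01])
  qed
  have I1022: "path_image (g 1 0) \<inter> path_image (g 2 2) \<subseteq> {}"
  proof -
    have "path_image (g 1 0) \<inter> path_image (g 2 2) \<subseteq> {p 1, q 0} \<inter> {p 2, q 2}" by (rule gi) simp_all
    then show ?thesis by (rule inter4[OF _ dpp12 dpq12 dpq20[symmetric] dqq02])
  qed
  have I1112: "path_image (g 1 1) \<inter> path_image (g 1 2) \<subseteq> {p 1}"
  proof -
    have "path_image (g 1 1) \<inter> path_image (g 1 2) \<subseteq> {p 1, q 1} \<inter> {p 1, q 2}" by (rule gi) simp_all
    then show ?thesis by (rule inter_a[OF _ dqq12])
  qed
  have I1120: "path_image (g 1 1) \<inter> path_image (g 2 0) \<subseteq> {}"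
  proof -
    have "path_image (g 1 1) \<inter> path_image (g 2 0) \<subseteq> {p 1, q 1} \<inter> {p 2, q 0}" by (rule gi) simp_all
    then show ?thesis by (rule inter4[OF _ dpp12 dpq10 dpq21[symmetric] dqq10])
  qed
  have I1121: "path_image (g 1 1) \<inter> path_image (g 2 1) \<subseteq> {q 1}"
  proof -
    have "path_image (g 1 1) \<inter> path_image (g 2 1) \<subseteq> {p 1, q 1} \<inter> {p 2, q 1}" by (rule gi) simp_all
    then show ?thesis by (rule inter_b[OF _ dpp12])
  qed
  have I1122: "path_image (g 1 1) \<inter> path_image (g 2 2) \<subseteq> {}"
  proof -
    have "path_image (g 1 1) \<inter> path_image (g 2 2) \<subseteq> {p 1, q 1} \<inter> {p 2, q 2}" by (rule gi) simp_all
    then show ?thesis by (rule inter4[OF _ dpp12 dpq12 dpq21[symmetric] dqq12])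
  qed
  have I1220: "path_image (g 1 2) \<inter> path_image (g 2 0) \<subseteq> {}"
  proof -
    have "path_image (g 1 2) \<inter> path_image (g 2 0) \<subseteq> {p 1, q 2} \<inter> {p 2, q 0}" by (rule gi) simp_all
    then show ?thesis by (rule inter4[OF _ dpp12 dpq10 dpq22[symmetric] dqq20])
  qed
  have I1221: "path_image (g 1 2) \<inter> path_image (g 2 1) \<subseteq> {}"
  proof -
    have "path_image (g 1 2) \<inter> path_image (g 2 1) \<subseteq> {p 1, q 2} \<inter> {p 2, q 1}" by (rule gi) simp_all
    then show ?thesis by (rule inter4[OF _ dpp12 dpq11 dpq22[symmetric] dqq21])
  qed
  have I1222: "path_image (g 1 2) \<inter> path_image (g 2 2) \<subseteq> {q 2}"
  proof -
    have "path_image (g 1 2) \<inter> path_image (g 2 2) \<subseteq> {p 1, q 2} \<inter> {p 2, q 2}" by (rule gi) simp_all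
    then show ?thesis by (rule inter_b[OF _ dpp12])
  qed
  have I2021: "path_image (g 2 0) \<inter> path_image (g 2 1) \<subseteq> {p 2}"
  proof -
    have "path_image (g 2 0) \<inter> path_image (g 2 1) \<subseteq> {p 2, q 0} \<inter> {p 2, q 1}" by (rule gi) simp_all
    then show ?thesis by (rule inter_a[OF _ dqq01])
  qed
  have I2022: "path_image (g 2 0) \<inter> path_image (g 2 2) \<subseteq> {p 2}"
  proof -
    have "path_image (g 2 0) \<inter> path_image (g 2 2) \<subseteq> {p 2, q 0} \<inter> {p 2, q 2}" by (rule gi) simp_all
    then show ?thesis by (rule inter_a[OF _ dqq02])
  qed
  have I2122: "path_image (g 2 1) \<inter> path_image (g 2 2) \<subseteq> {p 2}"
  proof -
    have "path_image (g 2 1) \<inter> path_image (g 2 2) \<subseteq> {p 2, q 1} \<inter> {p 2, q 2}" by (rule gi) simp_all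
    then show ?thesis by (rule inter_a[OF _ dqq12])
  qed
  define P1 where "P1 = (g 0 0) +++ ((reversepath (g 1 0)) +++ (g 1 1))"
  have P1a: "arc P1" and P1i: "path_image P1 = path_image (g 0 0) \<union> path_image (g 1 0) \<union> path_image (g 1 1)"
    and P1s: "pathstart P1 = p 0" and P1f: "pathfinish P1 = q 1"
    unfolding P1_def
    using arc3x[OF a00 arc_reversepath[OF a10] a11, of "p 0" "q 0" "p 1" "q 1"]
      I0010 I1011 I0011 s00 f00 s10 f10 s11 f11
    by (simp_all add: Int_commute)
  define P2 where "P2 = (g 0 2) +++ ((reversepath (g 2 2)) +++ (g 2 1))"
  have P2a: "arc P2" and P2i: "path_image P2 = path_image (g 0 2) \<union> path_image (g 2 2) \<union> path_image (g 2 1)"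
    and P2s: "pathstart P2 = p 0" and P2f: "pathfinish P2 = q 1"
    unfolding P2_def
    using arc3x[OF a02 arc_reversepath[OF a22] a21, of "p 0" "q 2" "p 2" "q 1"]
      I0222 I2122 I0221 s02 f02 s22 f22 s21 f21
    by (simp_all add: Int_commute)
  define Q1 where "Q1 = (g 1 1) +++ ((reversepath (g 2 1)) +++ (g 2 2))"
  have Q1a: "arc Q1" and Q1i: "path_image Q1 = path_image (g 1 1) \<union> path_image (g 2 1) \<union> path_image (g 2 2)"
    and Q1s: "pathstart Q1 = p 1" and Q1f: "pathfinish Q1 = q 2"
    unfolding Q1_def
    using arc3x[OF a11 arc_reversepath[OF a21] a22, of "p 1" "q 1" "p 2" "q 2"]
      I1121 I2122 I1122 s11 f11 s21 f21 s22 f22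
    by (simp_all add: Int_commute)
  define Q2 where "Q2 = (g 1 0) +++ ((reversepath (g 0 0)) +++ (g 0 2))"
  have Q2a: "arc Q2" and Q2i: "path_image Q2 = path_image (g 1 0) \<union> path_image (g 0 0) \<union> path_image (g 0 2)"
    and Q2s: "pathstart Q2 = p 1" and Q2f: "pathfinish Q2 = q 2"
    unfolding Q2_def
    using arc3x[OF a10 arc_reversepath[OF a00] a02, of "p 1" "q 0" "p 0" "q 2"]
      I0010 I0002 I0210 s10 f10 s00 f00 s02 f02
    by (simp_all add: Int_commute)
  define H where "H = path_image (g 0 0) \<union> path_image (g 1 0) \<union> path_image (g 1 1) \<union> path_image (g 2 1) \<union> path_image (g 2 2) \<union> path_image (g 0 2)"
  have R1: "(oarc (g 0 1) \<subseteq> inside H \<and> oarc (g 1 2) \<subseteq> outside H) \<or> (oarc (g 0 1) \<subseteq> outside H \<and> oarc (g 1 2) \<subseteq> inside H)"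
  proof -
    have i12: "path_image P1 \<inter> path_image P2 \<subseteq> {p 0, q 1}" unfolding P1i P2i using I0002 I0022 I0021 I0210 I1022 I1021 I0211 I1122 I1121 by blast
    have i1c: "path_image P1 \<inter> path_image (g 0 1) \<subseteq> {p 0, q 1}" unfolding P1i using I0001 I0110 I0111 by blast
    have i2c: "path_image P2 \<inter> path_image (g 0 1) \<subseteq> {p 0, q 1}" unfolding P2i using I0102 I0122 I0121 by blast
    have ds: "pathstart (g 1 2) \<in> oarc P1" unfolding oarc_def P1i P1s P1f using m10(1) dpp10 dpq11 s12 f12 by simp
    have df: "pathfinish (g 1 2) \<in> oarc P2" unfolding oarc_def P2i P2s P2f using m02(2) dpq02[symmetric] dqq21 s12 f12 by simp
    have dd: "oarc (g 1 2) \<inter> (path_image P1 \<union> path_image P2 \<union> path_image (g 0 1)) = {}" unfolding oarc_def P1i P2i using s12 f12 I0012 I1012 I1112 I0212 I1222 I1221 I0112 by auto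
    have ad: "arc (g 1 2)" using a12 by (simp add: arc_reversepath)
    have res: "(oarc (g 0 1) \<subseteq> inside (path_image P1 \<union> path_image P2) \<and> oarc (g 1 2) \<subseteq> outside (path_image P1 \<union> path_image P2)) \<or> (oarc (g 0 1) \<subseteq> outside (path_image P1 \<union> path_image P2) \<and> oarc (g 1 2) \<subseteq> inside (path_image P1 \<union> path_image P2))"
      by (rule chord_sides[OF P1a P2a a01 ad P1s P2s s01 P1f P2f f01 i12 i1c i2c ds df dd])
    have eq: "path_image P1 \<union> path_image P2 = H" unfolding P1i P2i H_def by blast
    from res show ?thesis by (simp only: eq oarc_reverse)
  qed
  have R2: "(oarc (g 0 1) \<subseteq> inside H \<and> oarc (g 2 0) \<subseteq> outside H) \<or> (oarc (g 0 1) \<subseteq> outside H \<and> oarc (g 2 0) \<subseteq> inside H)"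
  proof -
    have i12: "path_image P1 \<inter> path_image P2 \<subseteq> {p 0, q 1}" unfolding P1i P2i using I0002 I0022 I0021 I0210 I1022 I1021 I0211 I1122 I1121 by blast
    have i1c: "path_image P1 \<inter> path_image (g 0 1) \<subseteq> {p 0, q 1}" unfolding P1i using I0001 I0110 I0111 by blast
    have i2c: "path_image P2 \<inter> path_image (g 0 1) \<subseteq> {p 0, q 1}" unfolding P2i using I0102 I0122 I0121 by blast
    have ds: "pathstart (reversepath (g 2 0)) \<in> oarc P1" unfolding oarc_def P1i P1s P1f using m00(2) dpq00[symmetric] dqq01 s20 f20 by simp
    have df: "pathfinish (reversepath (g 2 0)) \<in> oarc P2" unfolding oarc_def P2i P2s P2f using m22(1) dpp20 dpq21 s20 f20 by simp
    have dd: "oarc (reversepath (g 2 0)) \<inter> (path_image P1 \<union> path_image P2 \<union> path_image (g 0 1)) = {}" unfolding oarc_def P1i P2i using s20 f20 I0020 I1020 I1120 I0220 I2022 I2021 I0120 by auto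
    have ad: "arc (reversepath (g 2 0))" using a20 by (simp add: arc_reversepath)
    have res: "(oarc (g 0 1) \<subseteq> inside (path_image P1 \<union> path_image P2) \<and> oarc (reversepath (g 2 0)) \<subseteq> outside (path_image P1 \<union> path_image P2)) \<or> (oarc (g 0 1) \<subseteq> outside (path_image P1 \<union> path_image P2) \<and> oarc (reversepath (g 2 0)) \<subseteq> inside (path_image P1 \<union> path_image P2))"
      by (rule chord_sides[OF P1a P2a a01 ad P1s P2s s01 P1f P2f f01 i12 i1c i2c ds df dd])
    have eq: "path_image P1 \<union> path_image P2 = H" unfolding P1i P2i H_def by blast
    from res show ?thesis by (simp only: eq oarc_reverse)
  qed
  have R3: "(oarc (g 1 2) \<subseteq> inside H \<and> oarc (g 2 0) \<subseteq> outside H) \<or> (oarc (g 1 2) \<subseteq> outside H \<and> oarc (g 2 0) \<subseteq> inside H)"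
  proof -
    have i12: "path_image Q1 \<inter> path_image Q2 \<subseteq> {p 1, q 2}" unfolding Q1i Q2i using I1011 I0011 I0211 I1021 I0021 I0221 I1022 I0022 I0222 by blast
    have i1c: "path_image Q1 \<inter> path_image (g 1 2) \<subseteq> {p 1, q 2}" unfolding Q1i using I1112 I1221 I1222 by blast
    have i2c: "path_image Q2 \<inter> path_image (g 1 2) \<subseteq> {p 1, q 2}" unfolding Q2i using I1012 I0012 I0212 by blast
    have ds: "pathstart (g 2 0) \<in> oarc Q1" unfolding oarc_def Q1i Q1s Q1f using m21(1) dpp21 dpq22 s20 f20 by simp
    have df: "pathfinish (g 2 0) \<in> oarc Q2" unfolding oarc_def Q2i Q2s Q2f using m10(2) dpq10[symmetric] dqq02 s20 f20 by simp
    have dd: "oarc (g 2 0) \<inter> (path_image Q1 \<union> path_image Q2 \<union> path_image (g 1 2)) = {}" unfolding oarc_def Q1i Q2i using s20 f20 I1120 I2021 I2022 I1020 I0020 I0220 I1220 by auto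
    have ad: "arc (g 2 0)" using a20 by (simp add: arc_reversepath)
    have res: "(oarc (g 1 2) \<subseteq> inside (path_image Q1 \<union> path_image Q2) \<and> oarc (g 2 0) \<subseteq> outside (path_image Q1 \<union> path_image Q2)) \<or> (oarc (g 1 2) \<subseteq> outside (path_image Q1 \<union> path_image Q2) \<and> oarc (g 2 0) \<subseteq> inside (path_image Q1 \<union> path_image Q2))"
      by (rule chord_sides[OF Q1a Q2a a12 ad Q1s Q2s s12 Q1f Q2f f12 i12 i1c i2c ds df dd])
    have eq: "path_image Q1 \<union> path_image Q2 = H" unfolding Q1i Q2i H_def by blast
    from res show ?thesis by (simp only: eq oarc_reverse)
  qed
  have ne: "oarc (g 0 1) \<noteq> {}" "oarc (g 1 2) \<noteq> {}" "oarc (g 2 0) \<noteq> {}"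
    using oarc_nonempty a01 a12 a20 by auto
  show False using R1 R2 R3 ne inside_Int_outside[of H] by blast
qed



definition og :: "('a \<Rightarrow> complex) \<Rightarrow> ('a set \<Rightarrow> real \<Rightarrow> complex) \<Rightarrow> 'a \<Rightarrow> 'a \<Rightarrow> real \<Rightarrow> complex" where
  "og pos \<gamma> u v = (if pathstart (\<gamma> {u,v}) = pos u then \<gamma> {u,v} else reversepath (\<gamma> {u,v}))"

lemma og_props:
  assumes "arc (\<gamma> {u,v})" "{pathstart (\<gamma> {u, v}), pathfinish (\<gamma> {u, v})} = {pos u, pos v}" "pos u \<noteq> pos v"
  shows "arc (og pos \<gamma> u v)" "pathstart (og pos \<gamma> u v) = pos u" "pathfinish (og pos \<gamma> u v) = pos v"
    "path_image (og pos \<gamma> u v) = path_image (\<gamma> {u,v})"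
proof -
  consider "pathstart (\<gamma> {u,v}) = pos u" "pathfinish (\<gamma> {u,v}) = pos v"
    | "pathstart (\<gamma> {u,v}) = pos v" "pathfinish (\<gamma> {u,v}) = pos u"
    using assms(2,3) by (metis doubleton_eq_iff)
  then have "arc (og pos \<gamma> u v) \<and> pathstart (og pos \<gamma> u v) = pos u \<and> pathfinish (og pos \<gamma> u v) = pos v
    \<and> path_image (og pos \<gamma> u v) = path_image (\<gamma> {u,v})"
  proof cases
    case 1 then show ?thesis using assms(1) by (simp add: og_def)
  next
    case 2 then show ?thesis using assms(1,3) by (simp add: og_def arc_reversepath)
  qed
  then show "arc (og pos \<gamma> u v)" "pathstart (og pos \<gamma> u v) = pos u" "pathfinish (og pos \<gamma> u v) = pos v"
    "path_image (og pos \<gamma> u v) = path_image (\<gamma> {u,v})" by blast+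
qed

lemma planar_emb:
  assumes "planar_graph V E" "simple_graph V E"
  obtains pos :: "'a \<Rightarrow> complex" and \<gamma> where "inj_on pos V"
    "\<And>u v. E u v \<Longrightarrow> arc (og pos \<gamma> u v) \<and> pathstart (og pos \<gamma> u v) = pos u \<and>
        pathfinish (og pos \<gamma> u v) = pos v \<and> path_image (og pos \<gamma> u v) = path_image (\<gamma> {u,v})"
    "\<And>u v u' v'. E u v \<Longrightarrow> E u' v' \<Longrightarrow> {u,v} \<noteq> {u',v'} \<Longrightarrow>
        path_image (\<gamma> {u,v}) \<inter> path_image (\<gamma> {u',v'}) \<subseteq> pos ` ({u,v} \<inter> {u',v'})"
proof -
  obtain pos :: "'a \<Rightarrow> complex" and \<gamma> where inj: "inj_on pos V" and
    ed0: "\<forall>u v. E u v \<longrightarrow> arc (\<gamma> {u, v}) \<and>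
          {pathstart (\<gamma> {u, v}), pathfinish (\<gamma> {u, v})} = {pos u, pos v} \<and>
          path_image (\<gamma> {u, v}) \<inter> pos ` V = {pos u, pos v}" and
    cr0: "\<forall>e \<in> edges E. \<forall>e' \<in> edges E. e \<noteq> e' \<longrightarrow>
          path_image (\<gamma> e) \<inter> path_image (\<gamma> e') \<subseteq> pos ` V"
    using assms(1) unfolding planar_graph_def by (elim exE conjE) (rule that)
  note ed = ed0[rule_format] and cr = cr0[rule_format]
  have sg: "\<And>u v. E u v \<Longrightarrow> u \<in> V \<and> v \<in> V \<and> u \<noteq> v \<and> E v u"
    using assms(2) unfolding simple_graph_def by blast
  show ?thesis
  proof (rule that)
    show "inj_on pos V" by (rule inj)
    fix u v assume e: "E u v"
    have ne: "pos u \<noteq> pos v" using sg[OF e] inj by (meson inj_on_eq_iff)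
    have E1: "arc (\<gamma> {u,v})" "{pathstart (\<gamma> {u, v}), pathfinish (\<gamma> {u, v})} = {pos u, pos v}"
      using ed[OF e] by simp_all
    note O = og_props[of \<gamma> u v pos, OF E1 ne]
    show "arc (og pos \<gamma> u v) \<and> pathstart (og pos \<gamma> u v) = pos u \<and>
        pathfinish (og pos \<gamma> u v) = pos v \<and> path_image (og pos \<gamma> u v) = path_image (\<gamma> {u,v})"
      using O by (intro conjI)
  next
    fix u v u' v' assume e: "E u v" and e': "E u' v'" and ne: "{u,v} \<noteq> {u',v'}"
    show "path_image (\<gamma> {u,v}) \<inter> path_image (\<gamma> {u',v'}) \<subseteq> pos ` ({u,v} \<inter> {u',v'})"
    proof
      fix x assume x: "x \<in> path_image (\<gamma> {u,v}) \<inter> path_image (\<gamma> {u',v'})"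
      have e1: "{u,v} \<in> edges E" using e unfolding edges_def by blast
      have e2: "{u',v'} \<in> edges E" using e' unfolding edges_def by blast
      have xV: "x \<in> pos ` V" by (rule subsetD[OF cr[OF e1 e2 ne] x])
      have i1: "path_image (\<gamma> {u, v}) \<inter> pos ` V = {pos u, pos v}" using ed[OF e] by simp
      have i2: "path_image (\<gamma> {u', v'}) \<inter> pos ` V = {pos u', pos v'}" using ed[OF e'] by simp
      have x1: "x \<in> {pos u, pos v}" using xV x i1 by blast
      have x2: "x \<in> {pos u', pos v'}" using xV x i2 by blast
      have V: "u \<in> V" "v \<in> V" "u' \<in> V" "v' \<in> V" using sg e e' by blast+
      obtain w where w: "w \<in> {u,v}" "x = pos w" using x1 by blast
      obtain w' where w': "w' \<in> {u',v'}" "x = pos w'" using x2 by blast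
      have "w \<in> V" "w' \<in> V" using w(1) w'(1) V by blast+
      then have "w = w'" using inj w(2) w'(2) by (metis inj_onD)
      then show "x \<in> pos ` ({u,v} \<inter> {u',v'})" using w w' by blast
    qed
  qed
qed


lemma no_K33_graph:
  fixes X Y M :: "nat \<Rightarrow> 'a"
  assumes pl: "planar_graph V E" and sg0: "simple_graph V E"
    and XX: "\<And>i i'. i < 3 \<Longrightarrow> i' < 3 \<Longrightarrow> i \<noteq> i' \<Longrightarrow> X i \<noteq> X i'"
    and YY: "\<And>j j'. j < 3 \<Longrightarrow> j' < 3 \<Longrightarrow> j \<noteq> j' \<Longrightarrow> Y j \<noteq> Y j'"
    and XY: "\<And>i j. i < 3 \<Longrightarrow> j < 3 \<Longrightarrow> X i \<noteq> Y j"
    and MM: "\<And>j j'. mid \<Longrightarrow> j < 3 \<Longrightarrow> j' < 3 \<Longrightarrow> j \<noteq> j' \<Longrightarrow> M j \<noteq> M j'"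
    and MX: "\<And>i j. mid \<Longrightarrow> i < 3 \<Longrightarrow> j < 3 \<Longrightarrow> M j \<noteq> X i"
    and MY: "\<And>j j'. mid \<Longrightarrow> j < 3 \<Longrightarrow> j' < 3 \<Longrightarrow> M j \<noteq> Y j'"
    and Ed: "\<And>i j. i < 3 \<Longrightarrow> j < 3 \<Longrightarrow>
       (if i = 2 \<and> mid then E (X i) (M j) \<and> E (M j) (Y j) else E (X i) (Y j))"
  shows False
proof -
  obtain pos :: "'a \<Rightarrow> complex" and \<gamma> where inj: "inj_on pos V" and
    og: "\<And>u v. E u v \<Longrightarrow> arc (og pos \<gamma> u v) \<and> pathstart (og pos \<gamma> u v) = pos u \<and>
        pathfinish (og pos \<gamma> u v) = pos v \<and> path_image (og pos \<gamma> u v) = path_image (\<gamma> {u,v})" and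
    cr: "\<And>u v u' v'. E u v \<Longrightarrow> E u' v' \<Longrightarrow> {u,v} \<noteq> {u',v'} \<Longrightarrow>
        path_image (\<gamma> {u,v}) \<inter> path_image (\<gamma> {u',v'}) \<subseteq> pos ` ({u,v} \<inter> {u',v'})"
    using planar_emb[OF pl sg0] by blast
  have sg: "\<And>u v. E u v \<Longrightarrow> u \<in> V \<and> v \<in> V \<and> u \<noteq> v \<and> E v u"
    using sg0 unfolding simple_graph_def by blast
  have XV: "X i \<in> V" if "i < 3" for i
  proof (cases "i = 2 \<and> mid")
    case True then show ?thesis using Ed[of i 0] that sg by auto
  next
    case False then show ?thesis using Ed[of i 0] that sg by auto
  qed
  have YV: "Y j \<in> V" if "j < 3" for j
    using Ed[of 0 j] that sg by auto
  define g where "g i j = (if i = 2 \<and> mid then og pos \<gamma> (X i) (M j) +++ og pos \<gamma> (M j) (Y j)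
      else og pos \<gamma> (X i) (Y j))" for i j
  define W where "W i j = (if i = 2 \<and> mid then {X i, M j, Y j} else {X i, Y j})" for i j
  define F where "F i j = (if i = 2 \<and> mid then {{X i, M j}, {M j, Y j}} else {{X i, Y j}})" for i j
  have G1: "arc (g i j) \<and> pathstart (g i j) = pos (X i) \<and> pathfinish (g i j) = pos (Y j) \<and>
      path_image (g i j) = (\<Union>e \<in> F i j. path_image (\<gamma> e))" if ij: "i < 3" "j < 3" for i j
  proof (cases "i = 2 \<and> mid")
    case True
    have e1: "E (X i) (M j)" and e2: "E (M j) (Y j)" using Ed[OF ij] True by auto
    note o1 = og[OF e1] and o2 = og[OF e2]
    have ne: "{X i, M j} \<noteq> {M j, Y j}" using XY[OF ij] MX[of i j] True ij by (auto simp: doubleton_eq_iff)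
    have "path_image (\<gamma> {X i, M j}) \<inter> path_image (\<gamma> {M j, Y j}) \<subseteq> pos ` ({X i, M j} \<inter> {M j, Y j})"
      by (rule cr[OF e1 e2 ne])
    also have "\<dots> \<subseteq> {pos (M j)}" using XY[OF ij] by auto
    finally have int: "path_image (\<gamma> {X i, M j}) \<inter> path_image (\<gamma> {M j, Y j}) \<subseteq> {pos (M j)}" .
    have "arc (og pos \<gamma> (X i) (M j) +++ og pos \<gamma> (M j) (Y j))"
      apply (rule arc_join)
      using o1 o2 int by auto
    moreover have "g i j = og pos \<gamma> (X i) (M j) +++ og pos \<gamma> (M j) (Y j)" "F i j = {{X i, M j}, {M j, Y j}}"
      unfolding g_def F_def by (rule if_P[OF True])+
    ultimately show ?thesis using o1 o2 by (simp add: path_image_join)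
  next
    case False
    have e: "E (X i) (Y j)" using Ed[OF ij] False by auto
    have "g i j = og pos \<gamma> (X i) (Y j)" "F i j = {{X i, Y j}}"
      unfolding g_def F_def by (rule if_not_P[OF False])+
    then show ?thesis using og[OF e] by simp
  qed
  have G2: "\<forall>e \<in> F i j. \<exists>u v. e = {u,v} \<and> E u v \<and> u \<in> W i j \<and> v \<in> W i j"
    if ij: "i < 3" "j < 3" for i j
  proof (cases "i = 2 \<and> mid")
    case True
    have e: "E (X i) (M j)" "E (M j) (Y j)" using Ed[OF ij] True by auto
    have "F i j = {{X i, M j}, {M j, Y j}}" "W i j = {X i, M j, Y j}"
      unfolding W_def F_def by (rule if_P[OF True])+
    then show ?thesis using e by blast
  next
    case False
    have e: "E (X i) (Y j)" using Ed[OF ij] False by auto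
    have "F i j = {{X i, Y j}}" "W i j = {X i, Y j}"
      unfolding W_def F_def by (rule if_not_P[OF False])+
    then show ?thesis using e by blast
  qed
  have G3: "W i j \<inter> W i' j' \<subseteq> {X i, Y j} \<inter> {X i', Y j'}"
    if ij: "i < 3" "j < 3" "i' < 3" "j' < 3" "(i, j) \<noteq> (i', j')" for i j i' j'
  proof
    fix w assume w: "w \<in> W i j \<inter> W i' j'"
    have "w \<noteq> M j" if "i = 2 \<and> mid"
    proof
      assume wm: "w = M j"
      have "w \<in> W i' j'" using w by blast
      moreover have "M j \<noteq> X i'" "M j \<noteq> Y j'" using MX MY that ij by auto
      moreover have "M j \<noteq> M j'" if "i' = 2 \<and> mid" using MM that ij \<open>i = 2 \<and> mid\<close> by auto
      ultimately show False using wm by (auto simp: W_def split: if_splits)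
    qed
    moreover have "w \<noteq> M j'" if "i' = 2 \<and> mid"
    proof
      assume wm: "w = M j'"
      have "w \<in> W i j" using w by blast
      moreover have "M j' \<noteq> X i" "M j' \<noteq> Y j" using MX MY that ij by auto
      moreover have "M j' \<noteq> M j" if "i = 2 \<and> mid" using MM that ij \<open>i' = 2 \<and> mid\<close> by auto
      ultimately show False using wm by (auto simp: W_def split: if_splits)
    qed
    ultimately show "w \<in> {X i, Y j} \<inter> {X i', Y j'}" using w by (auto simp: W_def split: if_splits)
  qed
  have G4: "\<not> (u \<noteq> v \<and> u \<in> {X i, Y j} \<inter> {X i', Y j'} \<and> v \<in> {X i, Y j} \<inter> {X i', Y j'})"
    if ij: "i < 3" "j < 3" "i' < 3" "j' < 3" "(i, j) \<noteq> (i', j')" for i j i' j' u v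
  proof (cases "i = i'")
    case True
    then have "j \<noteq> j'" using ij by auto
    then show ?thesis using True YY[of j j'] XY[of i j'] XY[of i j] ij by auto
  next
    case False
    then show ?thesis using XX[of i i'] XY[of i j'] XY[of i' j] YY[of j j'] ij by auto
  qed
  show False
  proof (rule K33_nonplanar[of "\<lambda>i. pos (X i)" "\<lambda>j. pos (Y j)" g])
    fix i j :: nat assume ij: "i < 3" "j < 3"
    show "pos (X i) \<noteq> pos (Y j)" using XY[OF ij] XV YV ij inj by (metis inj_onD)
    show "arc (g i j)" "pathstart (g i j) = pos (X i)" "pathfinish (g i j) = pos (Y j)"
      using G1[OF ij] by auto
  next
    fix i i' :: nat assume ii: "i < 3" "i' < 3" "i \<noteq> i'"
    show "pos (X i) \<noteq> pos (X i')" using XX[OF ii] XV ii inj by (metis inj_onD)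
  next
    fix j j' :: nat assume jj: "j < 3" "j' < 3" "j \<noteq> j'"
    show "pos (Y j) \<noteq> pos (Y j')" using YY[OF jj] YV jj inj by (metis inj_onD)
  next
    fix i j i' j' :: nat assume ij: "i < 3" "j < 3" "i' < 3" "j' < 3" "(i, j) \<noteq> (i', j')"
    show "path_image (g i j) \<inter> path_image (g i' j') \<subseteq> {pos (X i), pos (Y j)} \<inter> {pos (X i'), pos (Y j')}"
    proof
      fix x assume x: "x \<in> path_image (g i j) \<inter> path_image (g i' j')"
      obtain e where e: "e \<in> F i j" "x \<in> path_image (\<gamma> e)" using x G1[OF ij(1,2)] by auto
      obtain e' where e': "e' \<in> F i' j'" "x \<in> path_image (\<gamma> e')" using x G1[OF ij(3,4)] by auto
      obtain u v where uv: "e = {u,v}" "E u v" "u \<in> W i j" "v \<in> W i j" using G2[OF ij(1,2)] e(1) by blast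
      obtain u' v' where uv': "e' = {u',v'}" "E u' v'" "u' \<in> W i' j'" "v' \<in> W i' j'" using G2[OF ij(3,4)] e'(1) by blast
      have sub: "W i j \<inter> W i' j' \<subseteq> {X i, Y j} \<inter> {X i', Y j'}" by (rule G3[OF ij])
      show "x \<in> {pos (X i), pos (Y j)} \<inter> {pos (X i'), pos (Y j')}"
      proof (cases "{u,v} = {u',v'}")
        case True
        then have "u \<in> W i' j'" "v \<in> W i' j'" using uv' by (auto simp: doubleton_eq_iff)
        then have "u \<noteq> v \<and> u \<in> {X i, Y j} \<inter> {X i', Y j'} \<and> v \<in> {X i, Y j} \<inter> {X i', Y j'}"
          using sub uv sg by blast
        then show ?thesis using G4[OF ij] by blast
      next
        case False
        have "x \<in> pos ` ({u,v} \<inter> {u',v'})" using cr[OF uv(2) uv'(2) False] e(2) e'(2) uv(1) uv'(1) by blast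
        then obtain w where "w \<in> {u,v} \<inter> {u',v'}" "x = pos w" by blast
        then have "w \<in> {X i, Y j} \<inter> {X i', Y j'}" "x = pos w" using sub uv uv' by blast+
        then show ?thesis by auto
      qed
    qed
  qed
qed



lemma three_of_card:
  assumes "3 \<le> card A"
  obtains a b c where "a \<in> A" "b \<in> A" "c \<in> A" "a \<noteq> b" "b \<noteq> c" "a \<noteq> c"
proof -
  obtain C where "C \<subseteq> A" "card C = 3" using obtain_subset_with_card_n[OF assms] by blast
  then show ?thesis using that unfolding card_3_iff by blast
qed

lemma card3_le:
  assumes "finite A" "a \<in> A" "b \<in> A" "c \<in> A" "a \<noteq> b" "b \<noteq> c" "a \<noteq> c"
  shows "3 \<le> card A"
proof -
  have "card {a,b,c} = 3" using assms by simp
  moreover have "card {a,b,c} \<le> card A" using assms by (intro card_mono) auto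
  ultimately show ?thesis by simp
qed

lemma pair3:
  fixes x y z :: "'a \<times> 'b"
  assumes "x \<noteq> y" "y \<noteq> z" "x \<noteq> z" "\<not> (fst x = fst y \<and> fst y = fst z)" "\<not> (snd x = snd y \<and> snd y = snd z)"
  shows "(fst x \<noteq> fst y \<and> snd x \<noteq> snd y) \<or> (fst x \<noteq> fst z \<and> snd x \<noteq> snd z) \<or>
          (fst y \<noteq> fst z \<and> snd y \<noteq> snd z)"
  using assms by (cases x; cases y; cases z) auto

lemma matching3:
  fixes P :: "('a \<times> 'b) set"
  assumes fin: "finite P" and c5: "5 \<le> card P"
    and da: "\<And>a. card {p \<in> P. fst p = a} \<le> 2"
    and db: "\<And>b. card {p \<in> P. snd p = b} \<le> 2"
  shows "\<exists>a0 b0 a1 b1 a2 b2. (a0,b0) \<in> P \<and> (a1,b1) \<in> P \<and> (a2,b2) \<in> P \<and>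
     a0 \<noteq> a1 \<and> a0 \<noteq> a2 \<and> a1 \<noteq> a2 \<and> b0 \<noteq> b1 \<and> b0 \<noteq> b2 \<and> b1 \<noteq> b2"
proof -
  obtain P5 where P5: "P5 \<subseteq> P" "card P5 = 5" "finite P5"
    using obtain_subset_with_card_n[OF c5] by blast
  have da5: "card {p \<in> P5. fst p = a} \<le> 2" for a
    by (rule order_trans[OF card_mono da[of a]]) (use fin P5(1) in auto)
  have db5: "card {p \<in> P5. snd p = b} \<le> 2" for b
    by (rule order_trans[OF card_mono db[of b]]) (use fin P5(1) in auto)
  have grp: "(\<Sum>a \<in> fst ` P5. card {p \<in> P5. fst p = a}) = card P5"
    using sum.group[OF P5(3) finite_imageI[OF P5(3)] subset_refl, of "\<lambda>_. 1::nat"] by simp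
  have "\<exists>a0 \<in> fst ` P5. card {p \<in> P5. fst p = a0} \<noteq> 2"
  proof (rule ccontr)
    assume "\<not> ?thesis"
    then have h: "\<And>a. a \<in> fst ` P5 \<Longrightarrow> card {p \<in> P5. fst p = a} = 2" by blast
    have "(\<Sum>a \<in> fst ` P5. card {p \<in> P5. fst p = a}) = (\<Sum>a \<in> fst ` P5. 2)"
      by (rule sum.cong[OF refl h])
    then have "card P5 = 2 * card (fst ` P5)" using grp by simp
    then show False using P5(2) by presburger
  qed
  then obtain a0 where a0: "a0 \<in> fst ` P5" "card {p \<in> P5. fst p = a0} \<noteq> 2" by blast
  obtain p0 where "p0 \<in> P5" "fst p0 = a0" using a0(1) by blast
  then have "{p \<in> P5. fst p = a0} \<noteq> {}" by blast
  then have "card {p \<in> P5. fst p = a0} \<noteq> 0" using P5(3) by simp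
  then have "card {p \<in> P5. fst p = a0} = 1" using a0(2) da5[of a0] by linarith
  then obtain q where q: "{p \<in> P5. fst p = a0} = {q}" by (rule card_1_singletonE)
  have "q \<in> {p \<in> P5. fst p = a0}" using q by blast
  then have "fst q = a0" by blast
  define b0 where "b0 = snd q"
  have b0: "q = (a0, b0)" using \<open>fst q = a0\<close> b0_def by (simp add: prod_eq_iff)
  have q5: "(a0,b0) \<in> P5" using q b0 by blast
  have uniq: "\<And>p. p \<in> P5 \<Longrightarrow> fst p = a0 \<Longrightarrow> p = (a0,b0)" using q b0 by blast
  define R where "R = {p \<in> P5. fst p \<noteq> a0 \<and> snd p \<noteq> b0}"
  have "P5 - R \<subseteq> {p \<in> P5. snd p = b0}" using uniq unfolding R_def by auto
  then have "card (P5 - R) \<le> card {p \<in> P5. snd p = b0}" by (rule card_mono[rotated]) (use P5(3) in simp)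
  then have "card (P5 - R) \<le> 2" using db5[of b0] by linarith
  moreover have RP5': "R \<subseteq> P5" unfolding R_def by blast
  moreover have finR: "finite R" using P5(3) R_def by simp
  moreover have "card (P5 - R) = card P5 - card R" by (rule card_Diff_subset[OF finR RP5'])
  moreover have "card R \<le> card P5" by (rule card_mono[OF P5(3) RP5'])
  ultimately have cR: "3 \<le> card R" using P5(2) by linarith
  obtain r1 r2 r3 where r: "r1 \<in> R" "r2 \<in> R" "r3 \<in> R" "r1 \<noteq> r2" "r2 \<noteq> r3" "r1 \<noteq> r3"
    using three_of_card[OF cR] by blast
  have RP5: "R \<subseteq> P5" unfolding R_def by blast
  have nfst: "\<not> (fst r1 = fst r2 \<and> fst r2 = fst r3)"
  proof
    assume h: "fst r1 = fst r2 \<and> fst r2 = fst r3"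
    have "3 \<le> card {p \<in> P5. fst p = fst r1}"
      apply (rule card3_le[of _ r1 r2 r3])
      using r h RP5 P5(3) by auto
    then show False using da5[of "fst r1"] by linarith
  qed
  have nsnd: "\<not> (snd r1 = snd r2 \<and> snd r2 = snd r3)"
  proof
    assume h: "snd r1 = snd r2 \<and> snd r2 = snd r3"
    have "3 \<le> card {p \<in> P5. snd p = snd r1}"
      apply (rule card3_le[of _ r1 r2 r3])
      using r h RP5 P5(3) by auto
    then show False using db5[of "snd r1"] by linarith
  qed
  have "\<exists>s t. s \<in> R \<and> t \<in> R \<and> fst s \<noteq> fst t \<and> snd s \<noteq> snd t"
  proof -
    have "(fst r1 \<noteq> fst r2 \<and> snd r1 \<noteq> snd r2) \<or> (fst r1 \<noteq> fst r3 \<and> snd r1 \<noteq> snd r3) \<or>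
          (fst r2 \<noteq> fst r3 \<and> snd r2 \<noteq> snd r3)"
      by (rule pair3[OF r(4,5,6) nfst nsnd])
    then show ?thesis using r(1-3) by blast
  qed
  then obtain s t where st: "s \<in> R" "t \<in> R" "fst s \<noteq> fst t" "snd s \<noteq> snd t" by blast
  show ?thesis
    apply (rule exI[of _ a0], rule exI[of _ b0], rule exI[of _ "fst s"], rule exI[of _ "snd s"],
        rule exI[of _ "fst t"], rule exI[of _ "snd t"])
    using st q5 P5(1) unfolding R_def by auto
qed


lemma edges_within_bound:
  fixes T V :: "'a set" and E :: "'a \<Rightarrow> 'a \<Rightarrow> bool"
  assumes finT: "finite T" and TV: "T \<subseteq> V" and sym: "\<And>u v. E u v \<Longrightarrow> E v u"
    and irr: "\<And>u. \<not> E u u"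
    and deg: "\<And>v. v \<in> T \<Longrightarrow> card (nbhd V E v \<inter> T) \<le> 2"
  shows "card (edges_between E T T) \<le> card T"
proof -
  define Ed where "Ed = edges_between E T T"
  have EdT: "e \<subseteq> T" if "e \<in> Ed" for e using that unfolding Ed_def edges_between_def by auto
  have Ed2: "card e = 2" if eEd: "e \<in> Ed" for e
  proof -
    obtain u v where "e = {u,v}" "E u v" using eEd unfolding Ed_def edges_between_def by blast
    then show ?thesis using irr by (metis card_2_iff)
  qed
  have finEd: "finite Ed"
  proof -
    have "Ed \<subseteq> Pow T" using EdT by blast
    then show ?thesis using finT by (meson finite_Pow_iff finite_subset)
  qed
  have fib: "card {e \<in> Ed. v \<in> e} \<le> 2" if v: "v \<in> T" for v
  proof -
    have "{e \<in> Ed. v \<in> e} \<subseteq> (\<lambda>w. {v, w}) ` (nbhd V E v \<inter> T)"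
    proof
      fix e assume e: "e \<in> {e \<in> Ed. v \<in> e}"
      then obtain a b where ab: "e = {a,b}" "E a b" "a \<in> T" "b \<in> T" unfolding Ed_def edges_between_def by blast
      show "e \<in> (\<lambda>w. {v, w}) ` (nbhd V E v \<inter> T)"
      proof (cases "v = a")
        case True
        then have "b \<in> nbhd V E v \<inter> T" using ab TV unfolding nbhd_def by auto
        then show ?thesis using ab True by blast
      next
        case False
        then have "v = b" using e ab by blast
        then have "a \<in> nbhd V E v \<inter> T" using ab TV sym unfolding nbhd_def by auto
        then show ?thesis using ab \<open>v = b\<close> by blast
      qed
    qed
    then have "card {e \<in> Ed. v \<in> e} \<le> card ((\<lambda>w. {v, w}) ` (nbhd V E v \<inter> T))"
      by (rule card_mono[rotated]) (use finT in simp)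
    also have "\<dots> \<le> card (nbhd V E v \<inter> T)" by (rule card_image_le) (use finT in simp)
    also have "\<dots> \<le> 2" by (rule deg[OF v])
    finally show ?thesis .
  qed
  have "2 * card Ed = (\<Sum>e \<in> Ed. card e)" using Ed2 by simp
  also have "\<dots> = (\<Sum>e \<in> Ed. \<Sum>v \<in> T. if v \<in> e then 1 else 0)"
  proof (rule sum.cong[OF refl])
    fix e assume "e \<in> Ed"
    then have "{v \<in> T. v \<in> e} = e" using EdT by blast
    then have "card e = card {v \<in> T. v \<in> e}" by simp
    also have "\<dots> = (\<Sum>v \<in> T. if v \<in> e then 1 else 0)" using finT by (simp add: sum.inter_filter[symmetric])
    finally show "card e = (\<Sum>v \<in> T. if v \<in> e then 1 else 0)" .
  qed
  also have "\<dots> = (\<Sum>v \<in> T. \<Sum>e \<in> Ed. if v \<in> e then 1 else 0)" by (rule sum.swap)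
  also have "\<dots> = (\<Sum>v \<in> T. card {e \<in> Ed. v \<in> e})"
    using finEd by (simp add: sum.inter_filter[symmetric])
  also have "\<dots> \<le> (\<Sum>v \<in> T. 2)" by (rule sum_mono) (rule fib)
  also have "\<dots> = 2 * card T" by simp
  finally show ?thesis unfolding Ed_def by simp
qed



lemma less3: "(i::nat) < 3 \<longleftrightarrow> i = 0 \<or> i = 1 \<or> i = 2" by auto

theorem proposition3p8:
  fixes V B S :: "'a set" and E :: "'a \<Rightarrow> 'a \<Rightarrow> bool"
  assumes "planar_tumor_graph V E B S"
  shows "(\<forall>x \<in> B. \<forall>y \<in> B. x \<noteq> y \<longrightarrow>
            (\<forall>z \<in> V - {x, y}. card (nbhd V E z \<inter> tumor V E B S x y) \<le> 2) \<and>
            card (edges_between E (tumor V E B S x y) (tumor V E B S x y))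
              \<le> card (tumor V E B S x y))
       \<and> (\<forall>x \<in> B. \<forall>y \<in> B. \<forall>z \<in> B. \<forall>w \<in> B.
            x \<noteq> y \<longrightarrow> z \<noteq> w \<longrightarrow> {x, y} \<noteq> {z, w} \<longrightarrow>
            card (edges_between E (tumor V E B S x y) (tumor V E B S z w)) \<le> 4)"
proof -
  have tg: "tumor_graph V E B S" and pl: "planar_graph V E"
    using assms unfolding planar_tumor_graph_def by auto
  have sg0: "simple_graph V E" and BS: "B \<union> S = V" and BdS: "B \<inter> S = {}"
    using tg unfolding tumor_graph_def by auto
  have finV: "finite V" using sg0 unfolding simple_graph_def by blast
  have sg: "\<And>u v. E u v \<Longrightarrow> u \<in> V \<and> v \<in> V \<and> u \<noteq> v \<and> E v u"
    using sg0 unfolding simple_graph_def by blast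
  have tumE: "s \<in> S \<and> E s x \<and> E s y" if "s \<in> tumor V E B S x y" for s x y
  proof -
    have "s \<in> S" "nbhd V E s \<inter> B = {x,y}" using that unfolding tumor_def by auto
    then show ?thesis unfolding nbhd_def by blast
  qed
  have tumV: "tumor V E B S x y \<subseteq> V" for x y using tumE BS by blast
  have finT: "finite (tumor V E B S x y)" for x y using tumV finV finite_subset by blast
  have P1: "card (nbhd V E z \<inter> tumor V E B S x y) \<le> 2"
    if xy: "x \<in> B" "y \<in> B" "x \<noteq> y" and z: "z \<in> V - {x,y}" for x y z
  proof (rule ccontr)
    assume "\<not> ?thesis"
    then have "3 \<le> card (nbhd V E z \<inter> tumor V E B S x y)" by simp
    then obtain s0 s1 s2 where s: "s0 \<in> nbhd V E z \<inter> tumor V E B S x y"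
      "s1 \<in> nbhd V E z \<inter> tumor V E B S x y" "s2 \<in> nbhd V E z \<inter> tumor V E B S x y"
      "s0 \<noteq> s1" "s1 \<noteq> s2" "s0 \<noteq> s2"
      by (rule three_of_card)
    have e0: "s0 \<in> S" "E s0 x" "E s0 y" "E z s0" using s(1) tumE unfolding nbhd_def by blast+
    have e1: "s1 \<in> S" "E s1 x" "E s1 y" "E z s1" using s(2) tumE unfolding nbhd_def by blast+
    have e2: "s2 \<in> S" "E s2 x" "E s2 y" "E z s2" using s(3) tumE unfolding nbhd_def by blast+
    have nz: "s0 \<noteq> z" "s1 \<noteq> z" "s2 \<noteq> z" using e0(4) e1(4) e2(4) sg by blast+
    have nx: "s0 \<noteq> x" "s1 \<noteq> x" "s2 \<noteq> x" "s0 \<noteq> y" "s1 \<noteq> y" "s2 \<noteq> y"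
      using e0(1) e1(1) e2(1) xy BdS by blast+
    have zxy: "z \<noteq> x" "z \<noteq> y" using z by auto
    define X where "X i = (if i = 0 then x else if i = 1 then y else z)" for i :: nat
    define Y where "Y j = (if j = 0 then s0 else if j = 1 then s1 else s2)" for j :: nat
    show False
    proof (rule no_K33_graph[OF pl sg0, of X Y False "\<lambda>_. x"])
      fix i i' :: nat assume "i < 3" "i' < 3" "i \<noteq> i'"
      then show "X i \<noteq> X i'" using xy zxy unfolding X_def less3 by auto
    next
      fix j j' :: nat assume "j < 3" "j' < 3" "j \<noteq> j'"
      then show "Y j \<noteq> Y j'" using s unfolding Y_def less3 by auto
    next
      fix i j :: nat assume "i < 3" "j < 3"
      then show "X i \<noteq> Y j" using nz nx unfolding X_def Y_def less3 by auto
    next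
      fix i j :: nat assume "i < 3" "j < 3"
      then show "if i = 2 \<and> False then E (X i) x \<and> E x (Y j) else E (X i) (Y j)"
        using e0 e1 e2 sg unfolding X_def Y_def less3 by auto
    qed auto
  qed
  show ?thesis
  proof (intro conjI ballI impI)
    fix x y z assume xy: "x \<in> B" "y \<in> B" "x \<noteq> y" and z: "z \<in> V - {x,y}"
    show "card (nbhd V E z \<inter> tumor V E B S x y) \<le> 2" by (rule P1[OF xy z])
  next
    fix x y assume xy: "x \<in> B" "y \<in> B" "x \<noteq> y"
    show "card (edges_between E (tumor V E B S x y) (tumor V E B S x y)) \<le> card (tumor V E B S x y)"
    proof (rule edges_within_bound[OF finT tumV])
      show "\<And>u v. E u v \<Longrightarrow> E v u" using sg by blast
      show "\<And>u. \<not> E u u" using sg by blast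
      fix v assume v: "v \<in> tumor V E B S x y"
      have "v \<in> V - {x,y}" using tumE[OF v] tumV v xy BdS by blast
      then show "card (nbhd V E v \<inter> tumor V E B S x y) \<le> 2" by (rule P1[OF xy])
    qed
  next
    fix x y z w assume B4: "x \<in> B" "y \<in> B" "z \<in> B" "w \<in> B" and xy: "x \<noteq> y" and zw: "z \<noteq> w"
      and ne: "{x, y} \<noteq> {z, w}"
    define T1 where "T1 = tumor V E B S x y"
    define T2 where "T2 = tumor V E B S z w"
    have disj: "T1 \<inter> T2 = {}"
    proof
      show "T1 \<inter> T2 \<subseteq> {}"
      proof
        fix s assume "s \<in> T1 \<inter> T2"
        then have "nbhd V E s \<inter> B = {x,y}" "nbhd V E s \<inter> B = {z,w}"
          unfolding T1_def T2_def tumor_def by auto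
        then show "s \<in> {}" using ne by simp
      qed
    qed simp
    define P where "P = {(a,b). a \<in> T1 \<and> b \<in> T2 \<and> E a b}"
    have finP: "finite P"
    proof -
      have "P \<subseteq> T1 \<times> T2" unfolding P_def by auto
      then show ?thesis using finT unfolding T1_def T2_def by (meson finite_SigmaI finite_subset)
    qed
    have EB: "edges_between E T1 T2 = (\<lambda>(a,b). {a,b}) ` P"
      unfolding edges_between_def P_def by auto
    show "card (edges_between E (tumor V E B S x y) (tumor V E B S z w)) \<le> 4"
    proof (rule ccontr)
      assume "\<not> ?thesis"
      then have "5 \<le> card (edges_between E T1 T2)" unfolding T1_def T2_def by simp
      also have "\<dots> \<le> card P" unfolding EB by (rule card_image_le[OF finP])
      finally have c5: "5 \<le> card P" .
      have da: "card {p \<in> P. fst p = a} \<le> 2" for a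
      proof (cases "a \<in> T1")
        case True
        have "a \<in> V - {z,w}" using True tumE tumV B4 BdS unfolding T1_def by blast
        then have c2: "card (nbhd V E a \<inter> T2) \<le> 2" unfolding T2_def by (rule P1[OF B4(3,4) zw])
        have "{p \<in> P. fst p = a} \<subseteq> Pair a ` (nbhd V E a \<inter> T2)"
          unfolding P_def nbhd_def using sg by auto
        then have "card {p \<in> P. fst p = a} \<le> card (Pair a ` (nbhd V E a \<inter> T2))"
          by (rule card_mono[rotated]) (use finT in \<open>simp add: T2_def\<close>)
        also have "\<dots> \<le> card (nbhd V E a \<inter> T2)" by (rule card_image_le) (use finT in \<open>simp add: T2_def\<close>)
        finally show ?thesis using c2 by linarith
      next
        case False
        then have "{p \<in> P. fst p = a} = {}" unfolding P_def by auto
        then show ?thesis by (metis card.empty zero_le)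
      qed
      have db: "card {p \<in> P. snd p = b} \<le> 2" for b
      proof (cases "b \<in> T2")
        case True
        have "b \<in> V - {x,y}" using True tumE tumV B4 BdS unfolding T2_def by blast
        then have c2: "card (nbhd V E b \<inter> T1) \<le> 2" unfolding T1_def by (rule P1[OF B4(1,2) xy])
        have "{p \<in> P. snd p = b} \<subseteq> (\<lambda>a. (a, b)) ` (nbhd V E b \<inter> T1)"
          unfolding P_def nbhd_def using sg by auto
        then have "card {p \<in> P. snd p = b} \<le> card ((\<lambda>a. (a, b)) ` (nbhd V E b \<inter> T1))"
          by (rule card_mono[rotated]) (use finT in \<open>simp add: T1_def\<close>)
        also have "\<dots> \<le> card (nbhd V E b \<inter> T1)" by (rule card_image_le) (use finT in \<open>simp add: T1_def\<close>)
        finally show ?thesis using c2 by linarith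
      next
        case False
        then have "{p \<in> P. snd p = b} = {}" unfolding P_def by auto
        then show ?thesis by (metis card.empty zero_le)
      qed
      obtain a0 b0 a1 b1 a2 b2 where m: "(a0,b0) \<in> P" "(a1,b1) \<in> P" "(a2,b2) \<in> P"
        "a0 \<noteq> a1" "a0 \<noteq> a2" "a1 \<noteq> a2" "b0 \<noteq> b1" "b0 \<noteq> b2" "b1 \<noteq> b2"
        using matching3[OF finP c5 da db] by blast
      obtain t where t: "t \<in> {z,w}" "t \<notin> {x,y}" using ne xy zw by blast
      have tB: "t \<in> B" using t B4 by blast
      have ma: "a \<in> T1 \<and> b \<in> T2 \<and> E a b" if "(a,b) \<in> P" for a b using that unfolding P_def by auto
      have aT: "E a x \<and> E a y \<and> a \<in> S" if "a \<in> T1" for a using tumE that unfolding T1_def by blast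
      have bT: "E b t \<and> b \<in> S" if "b \<in> T2" for b using tumE that t(1) unfolding T2_def by blast
      define X where "X i = (if i = 0 then x else if i = 1 then y else t)" for i :: nat
      define Y where "Y j = (if j = 0 then a0 else if j = 1 then a1 else a2)" for j :: nat
      define M where "M j = (if j = 0 then b0 else if j = 1 then b1 else b2)" for j :: nat
      have A: "a0 \<in> T1" "a1 \<in> T1" "a2 \<in> T1" "b0 \<in> T2" "b1 \<in> T2" "b2 \<in> T2"
        "E a0 b0" "E a1 b1" "E a2 b2" using ma m by blast+
      have AS: "a0 \<in> S" "a1 \<in> S" "a2 \<in> S" "b0 \<in> S" "b1 \<in> S" "b2 \<in> S" using A aT bT by blast+
      have AB: "a0 \<notin> B" "a1 \<notin> B" "a2 \<notin> B" "b0 \<notin> B" "b1 \<notin> B" "b2 \<notin> B" using AS BdS by blast+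
      have ABd: "b \<noteq> a" if "a \<in> T1" "b \<in> T2" for a b using disj that by blast
      show False
      proof (rule no_K33_graph[OF pl sg0, of X Y True M])
        fix i i' :: nat assume "i < 3" "i' < 3" "i \<noteq> i'"
        then show "X i \<noteq> X i'" using xy t unfolding X_def less3 by auto
      next
        fix j j' :: nat assume "j < 3" "j' < 3" "j \<noteq> j'"
        then show "Y j \<noteq> Y j'" using m unfolding Y_def less3 by auto
      next
        fix i j :: nat assume "i < 3" "j < 3"
        then show "X i \<noteq> Y j" using AB B4 tB unfolding X_def Y_def less3 by auto
      next
        fix j j' :: nat assume "True" "j < 3" "j' < 3" "j \<noteq> j'"
        then show "M j \<noteq> M j'" using m unfolding M_def less3 by auto
      next
        fix i j :: nat assume "True" "i < 3" "j < 3"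
        then show "M j \<noteq> X i" using AB B4 tB unfolding X_def M_def less3 by auto
      next
        fix j j' :: nat assume "True" "j < 3" "j' < 3"
        then show "M j \<noteq> Y j'" using ABd A unfolding Y_def M_def less3 by auto
      next
        fix i j :: nat assume "i < 3" "j < 3"
        have ax: "E x a0" "E x a1" "E x a2" "E y a0" "E y a1" "E y a2"
          using aT A sg by blast+
        have tb: "E t b0" "E t b1" "E t b2" using bT A sg by blast+
        have ba: "E b0 a0" "E b1 a1" "E b2 a2" using A sg by blast+
        show "if i = 2 \<and> True then E (X i) (M j) \<and> E (M j) (Y j) else E (X i) (Y j)"
          using \<open>i < 3\<close> \<open>j < 3\<close> ax tb ba unfolding X_def Y_def M_def less3 by auto
      qed
    qed
  qed
qed


end
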